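(* Let $S,T\subseteq(\Sigma\cup\Gamma)^*$ be regular languages of finite shiftlag. Then $\mathit{minsync}(S,T)$ is regular if and only if $\mathit{allsync}(S,T)$ is regular.
   Context: $\Sigma,\Gamma$ are disjoint finite alphabets. For $w\in(\Sigma\cup\Gamma)^*$, $\llbracket w\rrbracket=(\pi_{\mathtt i}(w),\pi_{\mathtt o}(w))$ where $\pi_{\mathtt i}$ (resp. $\pi_{\mathtt o}$) deletes all letters of $\Gamma$ (resp. $\Sigma$), and $\llbracket L\rrbracket=\{\llbracket w\rrbracket:w\in L\}$. A position $i$ of $w$ is $\geq k$-lagged if the absolute difference between the numbers of $\Sigma$-letters and $\Gamma$-letters in $w[1..i]$ is at least $k$. A shift of $w$ is a position $i\in\{1,\dots,|w|-1\}$ with exactly one of $w[i],w[i+1]$ in $\Sigma$; shifts $i<j$ are consecutive if no shift lies strictly between them. $\mathit{shift}(w)$ is the number of shifts; $\mathit{shiftlag}(w)$ is the maximal $n$ such that $w$ contains $n$ consecutive shifts all $\geq n$-lagged. A language has finite shift (resp. finite shiftlag) if the supremum of $\mathit{shift}$ (resp. $\mathit{shiftlag}$) over its words is finite; $\mathrm{Reg}_{\mathsf{FS}}$ denotes the class of regular languages of finite shift. For $x\in(\Sigma\cup\Gamma)^*$, $x^{-1}T=\{z: xz\in T\}$, and $w[1,i]$ is the prefix of $w$ of length $i$. For $w,w'\in T$ with $\llbracket w\rrbracket=\llbracket w'\rrbracket$, write $w\preceq_T w'$ if for all $i\le|w|$, $(w'[1,i])^{-1}T\in\mathrm{Reg}_{\mathsf{FS}}$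 implies $(w[1,i])^{-1}T\in\mathrm{Reg}_{\mathsf{FS}}$. Define $\mathit{minsync}(S,T)=\{w\in T:\llbracket w\rrbracket\in\llbracket S\rrbracket,\ w\preceq_T w'\text{ for all }w'\in T\text{ with }\llbracket w'\rrbracket=\llbracket w\rrbracket\}$ and $\mathit{allsync}(S,T)=\{w\in T:\llbracket w\rrbracket\in\llbracket S\rrbracket\}$. *)

theory Defs
  imports Main
begin

text \<open>Letters: Inl a is a letter of Sigma (input), Inr b a letter of Gamma (output).
  The alphabets are the finite types 's and 'g; they are disjoint by construction.\<close>

type_synonym ('s,'g) word = "('s + 'g) list"

definition regular :: "'a list set \<Rightarrow> bool" where
  "regular L \<longleftrightarrow> (\<exists>(Q::nat set) \<delta> q0 F. finite Q \<and> q0 \<in> Q \<and>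
      (\<forall>q\<in>Q. \<forall>a. \<delta> q a \<in> Q) \<and> F \<subseteq> Q \<and> L = {w. foldl \<delta> q0 w \<in> F})"

definition pi_i :: "('s,'g) word \<Rightarrow> 's list" where
  "pi_i w = map projl (filter isl w)"

definition pi_o :: "('s,'g) word \<Rightarrow> 'g list" where
  "pi_o w = map projr (filter (\<lambda>x. \<not> isl x) w)"

definition sem :: "('s,'g) word \<Rightarrow> 's list \<times> 'g list" where
  "sem w = (pi_i w, pi_o w)"

definition sem_lang :: "('s,'g) word set \<Rightarrow> ('s list \<times> 'g list) set" where
  "sem_lang L = sem ` L"

text \<open>Positions are 1-based: position i refers to w!(i-1); the prefix w[1..i] is take i w.\<close>
definition lag :: "('s,'g) word \<Rightarrow> nat \<Rightarrow> int" where
  "lag w i = \<bar>int (length (filter isl (take i w))) - int (length (filter (\<lambda>x. \<not> isl x) (take i w)))\<bar>"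

definition lagged :: "('s,'g) word \<Rightarrow> nat \<Rightarrow> nat \<Rightarrow> bool" where
  "lagged w k i \<longleftrightarrow> lag w i \<ge> int k"

definition shifts :: "('s,'g) word \<Rightarrow> nat set" where
  "shifts w = {i. 1 \<le> i \<and> i < length w \<and> isl (w ! (i - 1)) \<noteq> isl (w ! i)}"

definition shift :: "('s,'g) word \<Rightarrow> nat" where
  "shift w = card (shifts w)"

definition consec_lagged_shifts :: "('s,'g) word \<Rightarrow> nat \<Rightarrow> nat \<Rightarrow> bool" where
  "consec_lagged_shifts w n k \<longleftrightarrow> (\<exists>f :: nat \<Rightarrow> nat.
     (\<forall>j<n. f j \<in> shifts w \<and> lagged w k (f j)) \<and>
     (\<forall>j. Suc j < n \<longrightarrow> f j < f (Suc j) \<and> (\<forall>s\<in>shifts w. \<not> (f j < s \<and> s < f (Suc j)))))"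

definition shiftlag :: "('s,'g) word \<Rightarrow> nat" where
  "shiftlag w = Max {n. consec_lagged_shifts w n n}"

definition finite_shift :: "('s,'g) word set \<Rightarrow> bool" where
  "finite_shift L \<longleftrightarrow> bdd_above (shift ` L)"

definition finite_shiftlag :: "('s,'g) word set \<Rightarrow> bool" where
  "finite_shiftlag L \<longleftrightarrow> bdd_above (shiftlag ` L)"

definition RegFS :: "('s,'g) word set \<Rightarrow> bool" where
  "RegFS L \<longleftrightarrow> regular L \<and> finite_shift L"

definition lquot :: "'a list \<Rightarrow> 'a list set \<Rightarrow> 'a list set" where
  "lquot x T = {z. x @ z \<in> T}"

definition preceq :: "('s,'g) word set \<Rightarrow> ('s,'g) word \<Rightarrow> ('s,'g) word \<Rightarrow> bool" where
  "preceq T w w' \<longleftrightarrow> w \<in> T \<and> w' \<in> T \<and> sem w = sem w' \<and>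
     (\<forall>i\<le>length w. RegFS (lquot (take i w') T) \<longrightarrow> RegFS (lquot (take i w) T))"

definition minsync :: "('s,'g) word set \<Rightarrow> ('s,'g) word set \<Rightarrow> ('s,'g) word set" where
  "minsync S T = {w \<in> T. sem w \<in> sem_lang S \<and>
      (\<forall>w'\<in>T. sem w' = sem w \<longrightarrow> preceq T w w')}"

definition allsync :: "('s,'g) word set \<Rightarrow> ('s,'g) word set \<Rightarrow> ('s,'g) word set" where
  "allsync S T = {w \<in> T. sem w \<in> sem_lang S}"

end

theory Submission
  imports Defs "HOL-Library.Sublist"
begin


lemma lquot_append: "lquot (x @ y) L = lquot y (lquot x L)"
  by (simp add: lquot_def)

lemma lquot_Nil[simp]: "lquot [] L = L"
  by (simp add: lquot_def)

lemma foldl_in_Q: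
  assumes "\<forall>q\<in>Q. \<forall>a. \<delta> q a \<in> Q" "q \<in> Q"
  shows "foldl \<delta> q x \<in> Q"
  using assms(2) by (induction x arbitrary: q) (use assms(1) in auto)

lemma quot_dfa:
  assumes H5: "L = {w. foldl \<delta> q0 w \<in> F}"
  shows "lquot x L = {z. foldl \<delta> (foldl \<delta> q0 x) z \<in> F}"
  unfolding lquot_def H5 by simp

lemma regular_fin_quot:
  assumes "regular L"
  shows "finite (range (\<lambda>x. lquot x L))"
proof -
  obtain Q :: "nat set" and \<delta> q0 F where H: "finite Q" "q0 \<in> Q" "\<forall>q\<in>Q. \<forall>a. \<delta> q a \<in> Q"
    "F \<subseteq> Q" "L = {w. foldl \<delta> q0 w \<in> F}"
    using assms unfolding regular_def by (elim exE conjE)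
  have "lquot x L \<in> (\<lambda>q. {z. foldl \<delta> q z \<in> F}) ` Q" for x
  proof (rule image_eqI)
    show "lquot x L = {z. foldl \<delta> (foldl \<delta> q0 x) z \<in> F}" by (rule quot_dfa[OF H(5)])
    show "foldl \<delta> q0 x \<in> Q" by (rule foldl_in_Q[OF H(3) H(2)])
  qed
  then have "range (\<lambda>x. lquot x L) \<subseteq> (\<lambda>q. {z. foldl \<delta> q z \<in> F}) ` Q" by blast
  moreover have "finite ((\<lambda>q. {z. foldl \<delta> q z \<in> F}) ` Q)" using H(1) by simp
  ultimately show ?thesis by (rule finite_subset)
qed

lemma fin_quot_regular:
  assumes "finite (range (\<lambda>x. lquot x L))"
  shows "regular L"
proof -
  let ?R = "range (\<lambda>x. lquot x L)"
  obtain f :: "_ \<Rightarrow> nat" and n where f: "f ` ?R = {i. i < n}" "inj_on f ?R"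
    using finite_imp_inj_to_nat_seg[OF assms] by blast
  define g where "g = inv_into ?R f"
  define \<delta> where "\<delta> q a = f (lquot [a] (g q))" for q a
  define F where "F = f ` {K \<in> ?R. [] \<in> K}"
  have gf: "g (f K) = K" if "K \<in> ?R" for K
    using f(2) that unfolding g_def by simp
  have run: "foldl \<delta> (f (lquot x L)) w = f (lquot (x @ w) L)" for x w
  proof (induction w arbitrary: x)
    case Nil then show ?case by simp
  next
    case (Cons a w)
    have "\<delta> (f (lquot x L)) a = f (lquot (x @ [a]) L)"
      unfolding \<delta>_def by (simp add: gf lquot_append)
    then show ?case using Cons[of "x @ [a]"] by simp
  qed
  have e1: "L = {w. foldl \<delta> (f (lquot [] L)) w \<in> F}"
  proof -
    have "w \<in> L \<longleftrightarrow> f (lquot w L) \<in> F" for w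
    proof
      assume "w \<in> L" then show "f (lquot w L) \<in> F" unfolding F_def lquot_def by auto
    next
      assume "f (lquot w L) \<in> F"
      then obtain K where "K \<in> ?R" "[] \<in> K" "f (lquot w L) = f K" unfolding F_def by auto
      then have "lquot w L = K" using f(2) by (auto dest: inj_onD)
      then show "w \<in> L" using \<open>[] \<in> K\<close> unfolding lquot_def by auto
    qed
    then show ?thesis using run[of "[]"] by auto
  qed
  have e2: "finite (f ` ?R)" using f(1) by simp
  have e3: "f (lquot [] L) \<in> f ` ?R" by blast
  have e4: "\<forall>q\<in>f ` ?R. \<forall>a. \<delta> q a \<in> f ` ?R"
  proof (intro ballI allI)
    fix q a assume "q \<in> f ` ?R"
    then obtain x where q: "q = f (lquot x L)" by auto
    have "\<delta> q a = f (lquot (x @ [a]) L)" unfolding q \<delta>_def by (simp add: gf lquot_append)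
    then show "\<delta> q a \<in> f ` ?R" by simp
  qed
  have e5: "F \<subseteq> f ` ?R" unfolding F_def by blast
  show ?thesis unfolding regular_def
    apply (rule exI[where x="f ` ?R"], rule exI[where x=\<delta>], rule exI[where x="f (lquot [] L)"], rule exI[where x=F])
    using e1 e2 e3 e4 e5 by (intro conjI)
qed

lemma regular_iff: "regular L \<longleftrightarrow> finite (range (\<lambda>x. lquot x L))"
  using regular_fin_quot fin_quot_regular by blast



lemma regular_quot_finite:
  assumes "finite (range \<sigma>)" "\<And>x. lquot x L = G (\<sigma> x)"
  shows "regular L"
proof -
  have "range (\<lambda>x. lquot x L) \<subseteq> G ` range \<sigma>" using assms(2) by auto
  then show ?thesis unfolding regular_iff using assms(1) finite_subset by blast
qed

lemma regular_quot_finite_in: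
  assumes "finite U" "\<And>x. \<sigma> x \<in> U" "\<And>x. lquot x L = G (\<sigma> x)"
  shows "regular L"
proof (rule regular_quot_finite[where \<sigma>=\<sigma> and G=G])
  show "finite (range \<sigma>)" using assms(1,2) by (metis finite_subset image_subsetI)
qed (rule assms(3))

lemma quot_in_range: "lquot x L \<in> range (\<lambda>x. lquot x L)" by blast

lemma regular_lquot:
  assumes "regular L" shows "regular (lquot x L)"
proof (rule regular_quot_finite_in[where \<sigma>="\<lambda>y. lquot (x @ y) L" and U="range (\<lambda>x. lquot x L)" and G=id])
  show "finite (range (\<lambda>x. lquot x L))" using assms by (simp add: regular_iff)
  show "\<And>y. lquot (x @ y) L \<in> range (\<lambda>x. lquot x L)" by (rule rangeI)
qed (simp add: lquot_append)

lemma regular_Int: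
  assumes "regular A" "regular B" shows "regular (A \<inter> B)"
proof (rule regular_quot_finite_in[where \<sigma>="\<lambda>x. (lquot x A, lquot x B)"
        and U="range (\<lambda>x. lquot x A) \<times> range (\<lambda>x. lquot x B)" and G="\<lambda>(X,Y). X \<inter> Y"])
  show "finite (range (\<lambda>x. lquot x A) \<times> range (\<lambda>x. lquot x B))" using assms by (simp add: regular_iff)
qed (simp_all add: lquot_def, blast)

lemma regular_Un:
  assumes "regular A" "regular B" shows "regular (A \<union> B)"
proof (rule regular_quot_finite_in[where \<sigma>="\<lambda>x. (lquot x A, lquot x B)"
        and U="range (\<lambda>x. lquot x A) \<times> range (\<lambda>x. lquot x B)" and G="\<lambda>(X,Y). X \<union> Y"])
  show "finite (range (\<lambda>x. lquot x A) \<times> range (\<lambda>x. lquot x B))" using assms by (simp add: regular_iff)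
qed (simp_all add: lquot_def, blast)

lemma regular_Diff:
  assumes "regular A" "regular B" shows "regular (A - B)"
proof (rule regular_quot_finite_in[where \<sigma>="\<lambda>x. (lquot x A, lquot x B)"
        and U="range (\<lambda>x. lquot x A) \<times> range (\<lambda>x. lquot x B)" and G="\<lambda>(X,Y). X - Y"])
  show "finite (range (\<lambda>x. lquot x A) \<times> range (\<lambda>x. lquot x B))" using assms by (simp add: regular_iff)
qed (simp_all add: lquot_def, blast)

lemma regular_inv_map:
  assumes "regular L" shows "regular {s. map h s \<in> L}"
proof (rule regular_quot_finite_in[where \<sigma>="\<lambda>x. lquot (map h x) L"
        and U="range (\<lambda>x. lquot x L)" and G="\<lambda>X. {s. map h s \<in> X}"])
  show "finite (range (\<lambda>x. lquot x L))" using assms by (simp add: regular_iff)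
qed (simp_all add: lquot_def)

definition conc :: "'a list set \<Rightarrow> 'a list set \<Rightarrow> 'a list set" where
  "conc A B = {x @ y | x y. x \<in> A \<and> y \<in> B}"

lemma lquot_conc:
  "lquot w (conc A B) = conc (lquot w A) B \<union> \<Union> {lquot (drop k w) B | k. k \<le> length w \<and> take k w \<in> A}"
proof (intro set_eqI iffI)
  fix z assume "z \<in> lquot w (conc A B)"
  then obtain x y where xy: "w @ z = x @ y" "x \<in> A" "y \<in> B" unfolding lquot_def conc_def by blast
  show "z \<in> conc (lquot w A) B \<union> \<Union> {lquot (drop k w) B | k. k \<le> length w \<and> take k w \<in> A}"
  proof (cases "length x \<le> length w")
    case True
    have "take (length x) (w @ z) = x" unfolding xy(1) by simp
    then have tx: "take (length x) w = x" using True by simp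
    have "drop (length x) (w @ z) = y" unfolding xy(1) by simp
    then have "drop (length x) w @ z = y" using True by simp
    then have "z \<in> lquot (drop (length x) w) B" unfolding lquot_def using xy(3) by simp
    moreover have "lquot (drop (length x) w) B \<in> {lquot (drop k w) B | k. k \<le> length w \<and> take k w \<in> A}"
      by (rule CollectI, rule exI[of _ "length x"]) (simp add: True tx xy(2))
    ultimately show ?thesis by (intro UnI2 UnionI)
  next
    case False
    have "take (length w) (x @ y) = w" unfolding xy(1)[symmetric] by simp
    then have tx: "take (length w) x = w" using False by simp
    have "drop (length w) (x @ y) = z" unfolding xy(1)[symmetric] by simp
    then have z: "z = drop (length w) x @ y" using False by simp
    have "w @ drop (length w) x = x" using tx by (metis append_take_drop_id)
    then have "drop (length w) x \<in> lquot w A" unfolding lquot_def using xy(2) by simp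
    then have "z \<in> conc (lquot w A) B" unfolding conc_def z using xy(3) by blast
    then show ?thesis by (rule UnI1)
  qed
next
  fix z assume "z \<in> conc (lquot w A) B \<union> \<Union> {lquot (drop k w) B | k. k \<le> length w \<and> take k w \<in> A}"
  then show "z \<in> lquot w (conc A B)"
  proof
    assume "z \<in> conc (lquot w A) B"
    then obtain x y where xy: "z = x @ y" "w @ x \<in> A" "y \<in> B" unfolding conc_def lquot_def by blast
    have "w @ z = (w @ x) @ y" unfolding xy(1) by simp
    then show ?thesis unfolding conc_def lquot_def using xy by blast
  next
    assume "z \<in> \<Union> {lquot (drop k w) B | k. k \<le> length w \<and> take k w \<in> A}"
    then obtain k where "take k w \<in> A" "drop k w @ z \<in> B" unfolding lquot_def by blast
    moreover have "w @ z = take k w @ (drop k w @ z)" by simp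
    ultimately show ?thesis unfolding conc_def lquot_def by blast
  qed
qed

lemma regular_conc:
  assumes "regular A" "regular B"
  shows "regular (conc A B)"
proof (rule regular_quot_finite_in[where \<sigma>="\<lambda>w. (lquot w A, {lquot (drop k w) B | k. k \<le> length w \<and> take k w \<in> A})"
        and U="range (\<lambda>x. lquot x A) \<times> Pow (range (\<lambda>x. lquot x B))"
        and G="\<lambda>(X,Y). conc X B \<union> \<Union> Y"])
  show "finite (range (\<lambda>x. lquot x A) \<times> Pow (range (\<lambda>x. lquot x B)))"
    using assms by (simp add: regular_iff)
  fix x
  have "{lquot (drop k x) B | k. k \<le> length x \<and> take k x \<in> A} \<subseteq> range (\<lambda>x. lquot x B)" by blast
  then show "(lquot x A, {lquot (drop k x) B | k. k \<le> length x \<and> take k x \<in> A})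
     \<in> range (\<lambda>x. lquot x A) \<times> Pow (range (\<lambda>x. lquot x B))" by simp
qed (simp add: lquot_conc)



definition cnt_i :: "('s,'g) word \<Rightarrow> nat" where "cnt_i u = length (filter isl u)"
definition cnt_o :: "('s,'g) word \<Rightarrow> nat" where "cnt_o u = length (filter (\<lambda>x. \<not> isl x) u)"
definition lagw :: "('s,'g) word \<Rightarrow> int" where "lagw u = \<bar>int (cnt_i u) - int (cnt_o u)\<bar>"

lemma lag_eq: "lag w i = lagw (take i w)"
  by (simp add: lag_def lagw_def cnt_i_def cnt_o_def)

lemma cnt_append[simp]: "cnt_i (u @ v) = cnt_i u + cnt_i v" "cnt_o (u @ v) = cnt_o u + cnt_o v"
  by (simp_all add: cnt_i_def cnt_o_def)

lemma cnt_sum: "cnt_i u + cnt_o u = length u"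
  unfolding cnt_i_def cnt_o_def by (rule sum_length_filter_compl)

lemma pi_append[simp]: "pi_i (u @ v) = pi_i u @ pi_i v" "pi_o (u @ v) = pi_o u @ pi_o v"
  by (simp_all add: pi_i_def pi_o_def)

lemma length_pi[simp]: "length (pi_i u) = cnt_i u" "length (pi_o u) = cnt_o u"
  by (simp_all add: pi_i_def pi_o_def cnt_i_def cnt_o_def)

lemma sem_length: "sem w = sem w' \<Longrightarrow> length w = length w'"
proof -
  assume "sem w = sem w'"
  then have "cnt_i w = cnt_i w'" "cnt_o w = cnt_o w'"
    unfolding sem_def by (metis length_pi prod.inject)+
  then show ?thesis using cnt_sum[of w] cnt_sum[of w'] by simp
qed

lemma lagw_append_ge: "lagw (x @ y) \<ge> lagw x - int (length y)"
  using cnt_sum[of y] unfolding lagw_def by simp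

lemma lagw_append_le: "lagw (x @ y) \<le> lagw x + int (length y)"
  using cnt_sum[of y] unfolding lagw_def by simp

lemma lagw_take_Suc: "lagw (take (Suc i) w) \<le> lagw (take i w) + 1"
proof (cases "i < length w")
  case True
  then have "take (Suc i) w = take i w @ [w ! i]" by (simp add: take_Suc_conv_app_nth)
  then show ?thesis using lagw_append_le[of "take i w" "[w ! i]"] by simp
next
  case False
  then show ?thesis by simp
qed

lemma lagw_le_length: "lagw u \<le> int (length u)"
  using cnt_sum[of u] unfolding lagw_def by simp

section \<open>shifts\<close>

lemma shifts_sub: "shifts w \<subseteq> {..<length w}"
  unfolding shifts_def by auto

lemma finite_shifts[simp]: "finite (shifts w)"
  using shifts_sub finite_subset by blast

lemma shifts_append_img: "(\<lambda>i. i + length x) ` shifts z \<subseteq> shifts (x @ z)"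
proof
  fix s assume "s \<in> (\<lambda>i. i + length x) ` shifts z"
  then obtain i where i: "i \<in> shifts z" "s = i + length x" by blast
  then have h: "1 \<le> i" "i < length z" "isl (z ! (i - 1)) \<noteq> isl (z ! i)" unfolding shifts_def by auto
  have e: "s - 1 = length x + (i - 1)" using h(1) i(2) by simp
  have "(x @ z) ! (s - 1) = z ! (i - 1)" unfolding e by (rule nth_append_length_plus)
  moreover have "(x @ z) ! s = z ! i" using i(2) by (simp add: nth_append)
  ultimately show "s \<in> shifts (x @ z)" unfolding shifts_def using h i(2) by auto
qed

lemma shift_append_ge: "shift z \<le> shift (x @ z)"
proof -
  have "shift z = card ((\<lambda>i. i + length x) ` shifts z)"
    unfolding shift_def by (rule card_image[symmetric]) (simp add: inj_on_def)
  also have "\<dots> \<le> card (shifts (x @ z))"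
    by (rule card_mono[OF finite_shifts shifts_append_img])
  finally show ?thesis unfolding shift_def .
qed

lemma shift_append_gt:
  assumes "x \<noteq> []" "z \<noteq> []" "isl (last x) \<noteq> isl (hd z)"
  shows "shift z + 1 \<le> shift (x @ z)"
proof -
  have "length x \<in> shifts (x @ z)"
  proof -
    have "(x @ z) ! (length x - 1) = last x" using assms(1) by (simp add: nth_append last_conv_nth)
    moreover have "(x @ z) ! length x = hd z" using assms(2) by (simp add: nth_append hd_conv_nth)
    ultimately show ?thesis unfolding shifts_def using assms by (auto simp: Suc_le_eq)
  qed
  moreover have "length x \<notin> (\<lambda>i. i + length x) ` shifts z" unfolding shifts_def by auto
  ultimately have "insert (length x) ((\<lambda>i. i + length x) ` shifts z) \<subseteq> shifts (x @ z)"
    using shifts_append_img by blast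
  then have "card (insert (length x) ((\<lambda>i. i + length x) ` shifts z)) \<le> shift (x @ z)"
    unfolding shift_def by (rule card_mono[OF finite_shifts])
  moreover have "card (insert (length x) ((\<lambda>i. i + length x) ` shifts z)) = shift z + 1"
    using \<open>length x \<notin> _\<close> unfolding shift_def
    by (simp add: card_image inj_on_def)
  ultimately show ?thesis by simp
qed

lemma finite_shift_iff: "finite_shift L \<longleftrightarrow> (\<exists>M. \<forall>z\<in>L. shift z \<le> M)"
  unfolding finite_shift_def bdd_above_def by auto

lemma finite_shift_mono: "A \<subseteq> B \<Longrightarrow> finite_shift B \<Longrightarrow> finite_shift A"
  unfolding finite_shift_iff by blast

lemma finite_shift_lquot_append:
  assumes "finite_shift (lquot x L)" shows "finite_shift (lquot (x @ y) L)"
proof -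
  obtain M where M: "\<forall>z\<in>lquot x L. shift z \<le> M" using assms finite_shift_iff by blast
  have "shift z \<le> M" if "z \<in> lquot (x @ y) L" for z
  proof -
    have "y @ z \<in> lquot x L" using that unfolding lquot_def by simp
    then have "shift (y @ z) \<le> M" using M by blast
    then show ?thesis using shift_append_ge[of z y] by simp
  qed
  then show ?thesis unfolding finite_shift_iff by blast
qed



lemma strict_mono_upto:
  assumes "\<forall>j. Suc j < n \<longrightarrow> f j < (f (Suc j) :: nat)" "i < j" "j < n"
  shows "f i < f j"
  using assms(2,3)
proof (induction j)
  case 0 then show ?case by simp
next
  case (Suc j)
  have fj: "f j < f (Suc j)" using assms(1) Suc.prems by blast
  show ?case
  proof (cases "i < j")
    case True
    then have "f i < f j" using Suc.IH Suc.prems by simp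
    then show ?thesis using fj by simp
  next
    case False
    then have "i = j" using Suc.prems by simp
    then show ?thesis using fj by simp
  qed
qed

lemma consec_le_length:
  assumes "consec_lagged_shifts w n k" shows "n \<le> length w"
proof -
  obtain f where f: "\<forall>j<n. f j \<in> shifts w \<and> lagged w k (f j)"
    "\<forall>j. Suc j < n \<longrightarrow> f j < f (Suc j) \<and> (\<forall>s\<in>shifts w. \<not> (f j < s \<and> s < f (Suc j)))"
    using assms unfolding consec_lagged_shifts_def by blast
  have inc: "\<forall>j. Suc j < n \<longrightarrow> f j < f (Suc j)" using f(2) by blast
  have "inj_on f {..<n}"
  proof (rule inj_onI)
    fix a b assume "a \<in> {..<n}" "b \<in> {..<n}" "f a = f b"
    then show "a = b" using strict_mono_upto[OF inc, of a b] strict_mono_upto[OF inc, of b a]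
      by (metis lessThan_iff less_irrefl nat_neq_iff)
  qed
  then have "n = card (f ` {..<n})" by (simp add: card_image)
  also have "\<dots> \<le> card {..<length w}"
    by (rule card_mono) (use f(1) shifts_sub in auto)
  finally show ?thesis by simp
qed

lemma consec_le_shiftlag:
  assumes "consec_lagged_shifts w n n" shows "n \<le> shiftlag w"
proof -
  have "{n. consec_lagged_shifts w n n} \<subseteq> {..length w}" using consec_le_length by auto
  then have "finite {n. consec_lagged_shifts w n n}" using finite_subset by blast
  then show ?thesis unfolding shiftlag_def using assms by (simp add: Max_ge)
qed

lemma shifts_append_back:
  assumes "s \<in> shifts (x @ z)" "length x < s"
  shows "s - length x \<in> shifts z"
proof -
  have h: "1 \<le> s" "s < length (x @ z)" "isl ((x @ z) ! (s - 1)) \<noteq> isl ((x @ z) ! s)"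
    using assms(1) unfolding shifts_def by auto
  have e0: "s - 1 = length x + (s - length x - 1)" using assms(2) by simp
  have e1: "(x @ z) ! (s - 1) = z ! (s - length x - 1)"
    unfolding e0 by (rule nth_append_length_plus)
  have e2: "(x @ z) ! s = z ! (s - length x)"
    using assms(2) by (simp add: nth_append)
  show ?thesis unfolding shifts_def using h e1 e2 assms(2) by auto
qed

lemma lag_bound_single:
  assumes N: "\<forall>w\<in>T. shiftlag w \<le> N" and z: "z \<in> lquot x T" and sz: "N + 1 \<le> shift z"
  shows "lagw x < int (N + 1 + length z)"
proof (rule ccontr)
  assume "\<not> ?thesis"
  then have lx: "lagw x \<ge> int (N + 1 + length z)" by simp
  define w where "w = x @ z"
  have wT: "w \<in> T" using z unfolding w_def lquot_def by simp
  define S' where "S' = (\<lambda>i. i + length x) ` shifts z"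
  have cS: "card S' = shift z" unfolding S'_def shift_def by (simp add: card_image inj_on_def)
  have S'sub: "S' \<subseteq> shifts w" unfolding S'_def w_def by (rule shifts_append_img)
  have fS: "finite S'" unfolding S'_def by simp
  define xs where "xs = sorted_list_of_set S'"
  have xs: "sorted_wrt (<) xs" "set xs = S'" "length xs = card S'"
    unfolding xs_def using fS by (simp_all add: strict_sorted_list_of_set)
  define n where "n = N + 1"
  have nlen: "n \<le> length xs" using xs(3) cS sz unfolding n_def by simp
  have inS: "xs ! j \<in> S'" if "j < length xs" for j using xs(2) that nth_mem by blast
  have lagS: "lagged w n p" if "p \<in> S'" for p
  proof -
    obtain i where i: "i \<in> shifts z" "p = i + length x" using \<open>p \<in> S'\<close> unfolding S'_def by blast
    have il: "i \<le> length z" using i(1) shifts_sub by fastforce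
    have "take p w = x @ take i z" unfolding w_def i(2) by simp
    then have "lag w p = lagw (x @ take i z)" by (simp add: lag_eq)
    also have "\<dots> \<ge> lagw x - int (length (take i z))" by (rule lagw_append_ge)
    finally have "lag w p \<ge> lagw x - int i" using il by simp
    then show ?thesis unfolding lagged_def n_def using lx il by simp
  qed
  have "consec_lagged_shifts w n n"
    unfolding consec_lagged_shifts_def
  proof (rule exI[of _ "\<lambda>j. xs ! j"], intro conjI allI impI ballI)
    fix j assume "j < n"
    then have "j < length xs" using nlen by simp
    then show "xs ! j \<in> shifts w" "lagged w n (xs ! j)" using inS S'sub lagS by auto
  next
    fix j assume "Suc j < n"
    then have jl: "Suc j < length xs" using nlen by simp
    then show "xs ! j < xs ! Suc j" using xs(1) sorted_wrt_nth_less by blast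
    fix s assume s: "s \<in> shifts w"
    show "\<not> (xs ! j < s \<and> s < xs ! Suc j)"
    proof
      assume b: "xs ! j < s \<and> s < xs ! Suc j"
      have "xs ! j \<in> S'" using inS jl by simp
      then have "length x < xs ! j" unfolding S'_def shifts_def by auto
      then have "length x < s" using b by simp
      then have "s - length x \<in> shifts z" using shifts_append_back s unfolding w_def by blast
      then have "s \<in> S'" unfolding S'_def using \<open>length x < s\<close>
        by (metis add.commute image_eqI le_add_diff_inverse less_imp_le_nat)
      then obtain p where p: "p < length xs" "s = xs ! p" using xs(2) by (metis in_set_conv_nth)
      show False
      proof (cases "p \<le> j")
        case True
        then have "xs ! p \<le> xs ! j"
          using xs(1) jl sorted_wrt_nth_less[of "(<)" xs p j] by (cases "p = j") auto
        then show False using b p by simp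
      next
        case False
        then have "Suc j \<le> p" by simp
        then have "xs ! Suc j \<le> xs ! p"
          using xs(1) p(1) sorted_wrt_nth_less[of "(<)" xs "Suc j" p] by (cases "p = Suc j") auto
        then show False using b p by simp
      qed
    qed
  qed
  then have "n \<le> shiftlag w" by (rule consec_le_shiftlag)
  then show False using N wT unfolding n_def by fastforce
qed

lemma bad_lag_bound:
  fixes T :: "('s,'g) word set"
  assumes "regular T" "finite_shiftlag T"
  shows "\<exists>B. \<forall>x. \<not> finite_shift (lquot x T) \<longrightarrow> lagw x \<le> B"
proof -
  obtain N where N: "\<forall>w\<in>T. shiftlag w \<le> N"
    using assms(2) unfolding finite_shiftlag_def bdd_above_def by blast
  define BC where "BC = {K \<in> range (\<lambda>x. lquot x T). \<not> finite_shift K}"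
  have fBC: "finite BC" using assms(1) unfolding BC_def regular_iff by simp
  define zz :: "('s,'g) word set \<Rightarrow> ('s,'g) word" where "zz K = (SOME z. z \<in> K \<and> N + 1 \<le> shift z)" for K
  have zz: "zz K \<in> K \<and> N + 1 \<le> shift (zz K)" if "\<not> finite_shift K" for K
  proof -
    have "\<exists>z. z \<in> K \<and> N + 1 \<le> shift z"
    proof (rule ccontr)
      assume "\<not> (\<exists>z. z \<in> K \<and> N + 1 \<le> shift z)"
      then have "\<forall>z\<in>K. shift z \<le> N" by auto
      then show False using that unfolding finite_shift_iff by blast
    qed
    then show ?thesis unfolding zz_def by (rule someI_ex)
  qed
  define B where "B = Max (insert 0 ((\<lambda>K. int (N + 1 + length (zz K))) ` BC))"
  have "lagw x \<le> B" if "\<not> finite_shift (lquot x T)" for x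
  proof -
    let ?K = "lquot x T"
    have KB: "?K \<in> BC" unfolding BC_def using that by blast
    have "lagw x < int (N + 1 + length (zz ?K))"
      using lag_bound_single[OF N, of "zz ?K" x] zz[OF that] by blast
    moreover have "int (N + 1 + length (zz ?K)) \<le> B"
      unfolding B_def using fBC KB by (intro Max_ge) auto
    ultimately show ?thesis by simp
  qed
  then show ?thesis by blast
qed



definition pquot :: "'a list \<Rightarrow> 'b list \<Rightarrow> ('a list \<times> 'b list) set \<Rightarrow> ('a list \<times> 'b list) set" where
  "pquot a b \<rho> = {(s, t). (a @ s, b @ t) \<in> \<rho>}"

definition REC :: "('a list \<times> 'b list) set \<Rightarrow> bool" where
  "REC \<rho> \<longleftrightarrow> (\<exists>F. finite F \<and> (\<forall>(U,V)\<in>F. regular U \<and> regular V) \<and> \<rho> = (\<Union>(U,V)\<in>F. U \<times> V))"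

definition cat :: "('a list \<times> 'b list) set \<Rightarrow> ('a list \<times> 'b list) set \<Rightarrow> ('a list \<times> 'b list) set" where
  "cat \<rho>1 \<rho>2 = {(a @ c, b @ d) | a b c d. (a, b) \<in> \<rho>1 \<and> (c, d) \<in> \<rho>2}"

lemma REC_empty: "REC {}"
  unfolding REC_def by (rule exI[of _ "{}"]) simp

lemma REC_prod: "regular U \<Longrightarrow> regular V \<Longrightarrow> REC (U \<times> V)"
  unfolding REC_def by (rule exI[of _ "{(U,V)}"]) simp

lemma REC_Un: assumes "REC A" "REC B" shows "REC (A \<union> B)"
proof -
  obtain F where F: "finite F" "\<forall>(U,V)\<in>F. regular U \<and> regular V" "A = (\<Union>(U,V)\<in>F. U \<times> V)"
    using assms(1) unfolding REC_def by blast
  obtain G where G: "finite G" "\<forall>(U,V)\<in>G. regular U \<and> regular V" "B = (\<Union>(U,V)\<in>G. U \<times> V)"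
    using assms(2) unfolding REC_def by blast
  show ?thesis unfolding REC_def
    by (rule exI[of _ "F \<union> G"]) (use F G in auto)
qed

lemma REC_UN: "finite I \<Longrightarrow> (\<And>i. i \<in> I \<Longrightarrow> REC (f i)) \<Longrightarrow> REC (\<Union>i\<in>I. f i)"
  by (induction I rule: finite_induct) (simp_all add: REC_empty REC_Un)

lemma regular_singleton: "regular {e}"
proof (rule regular_quot_finite_in[where \<sigma>="\<lambda>x. lquot x {e}" and G=id
      and U="insert {} ((\<lambda>k. {drop k e}) ` {..length e})"])
  fix x
  show "lquot x {e} \<in> insert {} ((\<lambda>k. {drop k e}) ` {..length e})"
  proof (cases "prefix x e")
    case True
    then obtain r where e: "e = x @ r" by (auto simp: prefix_def)
    then have "lquot x {e} = {drop (length x) e}" unfolding lquot_def by auto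
    moreover have "length x \<le> length e" using e by simp
    ultimately show ?thesis by blast
  next
    case False
    then have "lquot x {e} = {}" unfolding lquot_def prefix_def by auto
    then show ?thesis by simp
  qed
qed simp_all

lemma regular_UNIV: "regular UNIV"
  by (rule regular_quot_finite_in[where \<sigma>="\<lambda>x. lquot x UNIV" and G=id and U="{UNIV}"])
     (auto simp: lquot_def)

lemma regular_empty: "regular {}"
  by (rule regular_quot_finite_in[where \<sigma>="\<lambda>x. lquot x {}" and G=id and U="{{}}"])
     (auto simp: lquot_def)

lemma REC_single: "REC {(a, b)}"
proof -
  have "{(a, b)} = {a} \<times> {b}" by simp
  then show ?thesis using REC_prod[OF regular_singleton regular_singleton] by simp
qed

lemma catI: "(a, b) \<in> A \<Longrightarrow> (c, d) \<in> B \<Longrightarrow> (a @ c, b @ d) \<in> cat A B"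
  unfolding cat_def by blast

lemma catE: "p \<in> cat A B \<Longrightarrow> (\<And>a b c d. p = (a @ c, b @ d) \<Longrightarrow> (a, b) \<in> A \<Longrightarrow> (c, d) \<in> B \<Longrightarrow> P) \<Longrightarrow> P"
  unfolding cat_def by blast

lemma cat_UN:
  "cat (\<Union>(U,V)\<in>F. U \<times> V) (\<Union>(U,V)\<in>G. U \<times> V)
   = (\<Union>((U,V),(U',V'))\<in>F \<times> G. conc U U' \<times> conc V V')"
proof (intro set_eqI iffI)
  fix p assume "p \<in> cat (\<Union>(U,V)\<in>F. U \<times> V) (\<Union>(U,V)\<in>G. U \<times> V)"
  then obtain a b c d where h: "p = (a @ c, b @ d)" "(a, b) \<in> (\<Union>(U,V)\<in>F. U \<times> V)" "(c, d) \<in> (\<Union>(U,V)\<in>G. U \<times> V)"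
    by (rule catE)
  from h(2) obtain U V where UV: "(U,V) \<in> F" "a \<in> U" "b \<in> V" by blast
  from h(3) obtain U' V' where UV': "(U',V') \<in> G" "c \<in> U'" "d \<in> V'" by blast
  have "p \<in> conc U U' \<times> conc V V'" unfolding h(1) conc_def using UV UV' by blast
  then show "p \<in> (\<Union>((U,V),(U',V'))\<in>F \<times> G. conc U U' \<times> conc V V')" using UV(1) UV'(1) by force
next
  fix p assume "p \<in> (\<Union>((U,V),(U',V'))\<in>F \<times> G. conc U U' \<times> conc V V')"
  then obtain U V U' V' where h: "(U,V) \<in> F" "(U',V') \<in> G" "p \<in> conc U U' \<times> conc V V'" by force
  then obtain a c b d where p: "p = (a @ c, b @ d)" "a \<in> U" "c \<in> U'" "b \<in> V" "d \<in> V'"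
    unfolding conc_def by blast
  have "(a, b) \<in> (\<Union>(U,V)\<in>F. U \<times> V)" using h(1) p by blast
  moreover have "(c, d) \<in> (\<Union>(U,V)\<in>G. U \<times> V)" using h(2) p by blast
  ultimately show "p \<in> cat (\<Union>(U,V)\<in>F. U \<times> V) (\<Union>(U,V)\<in>G. U \<times> V)"
    unfolding p(1) by (rule catI)
qed

lemma REC_cat: assumes "REC A" "REC B" shows "REC (cat A B)"
proof -
  obtain F where F: "finite F" "\<forall>(U,V)\<in>F. regular U \<and> regular V" "A = (\<Union>(U,V)\<in>F. U \<times> V)"
    using assms(1) unfolding REC_def by blast
  obtain G where G: "finite G" "\<forall>(U,V)\<in>G. regular U \<and> regular V" "B = (\<Union>(U,V)\<in>G. U \<times> V)"
    using assms(2) unfolding REC_def by blast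
  have "cat A B = (\<Union>((U,V),(U',V'))\<in>F \<times> G. conc U U' \<times> conc V V')"
    unfolding F(3) G(3) by (rule cat_UN)
  also have "REC \<dots>"
  proof (rule REC_UN)
    show "finite (F \<times> G)" using F(1) G(1) by simp
    fix x assume "x \<in> F \<times> G"
    obtain U V U' V' where x1: "x = ((U,V),(U',V'))" by (cases x) auto
    then have x: "x = ((U,V),(U',V'))" "(U,V) \<in> F" "(U',V') \<in> G" using \<open>x \<in> F \<times> G\<close> by auto
    have "regular U" "regular V" using F(2) x(2) by auto
    moreover have "regular U'" "regular V'" using G(2) x(3) by auto
    ultimately show "REC ((\<lambda>((U,V),(U',V')). conc U U' \<times> conc V V') x)"
      unfolding x(1) by (simp add: REC_prod regular_conc)
  qed
  finally show ?thesis .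
qed

lemma pquot_UN: "pquot a b (\<Union>(U,V)\<in>F. U \<times> V) = (\<Union>(U,V)\<in>F. lquot a U \<times> lquot b V)"
  unfolding pquot_def lquot_def by auto

lemma REC_pquot: assumes "REC \<rho>" shows "REC (pquot a b \<rho>)"
proof -
  obtain F where F: "finite F" "\<forall>(U,V)\<in>F. regular U \<and> regular V" "\<rho> = (\<Union>(U,V)\<in>F. U \<times> V)"
    using assms(1) unfolding REC_def by blast
  have "pquot a b \<rho> = (\<Union>(U,V)\<in>F. lquot a U \<times> lquot b V)"
    unfolding F(3) pquot_UN by simp
  also have "REC \<dots>"
  proof (rule REC_UN[OF F(1)])
    fix x assume "x \<in> F"
    obtain U V where x1: "x = (U,V)" by (cases x)
    then have x: "x = (U,V)" "(U,V) \<in> F" using \<open>x \<in> F\<close> by auto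
    then have "regular U" "regular V" using F(2) by auto
    then show "REC ((\<lambda>(U,V). lquot a U \<times> lquot b V) x)"
      unfolding x(1) by (simp add: REC_prod regular_lquot)
  qed
  finally show ?thesis .
qed

lemma sem_append: "sem (u @ v) = (pi_i u @ pi_i v, pi_o u @ pi_o v)"
  by (simp add: sem_def)

lemma lquot_sem_set: "lquot u {z. sem z \<in> \<rho>} = {z. sem z \<in> pquot (pi_i u) (pi_o u) \<rho>}"
  unfolding lquot_def pquot_def by (simp add: sem_append sem_def)

lemma REC_regular: assumes "REC \<rho>" shows "regular {z. sem z \<in> \<rho>}"
proof -
  obtain F where F: "finite F" "\<forall>(U,V)\<in>F. regular U \<and> regular V" "\<rho> = (\<Union>(U,V)\<in>F. U \<times> V)"
    using assms(1) unfolding REC_def by blast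
  define Q where "Q = (\<Union>(U,V)\<in>F. range (\<lambda>x. lquot x U) \<times> range (\<lambda>x. lquot x V))"
  have fQ: "finite Q" unfolding Q_def
  proof (rule finite_UN_I[OF F(1)])
    fix x assume "x \<in> F"
    obtain U V where x1: "x = (U,V)" by (cases x)
    then have x: "x = (U,V)" "(U,V) \<in> F" using \<open>x \<in> F\<close> by auto
    then have "regular U" "regular V" using F(2) by auto
    then show "finite ((\<lambda>(U,V). range (\<lambda>x. lquot x U) \<times> range (\<lambda>x. lquot x V)) x)"
      unfolding x(1) by (simp add: regular_iff)
  qed
  define \<sigma> where "\<sigma> u = (\<lambda>(U,V). (lquot (pi_i u) U, lquot (pi_o u) V)) ` F" for u
  show ?thesis
  proof (rule regular_quot_finite_in[where \<sigma>=\<sigma> and U="Pow Q" and G="\<lambda>S. {z. sem z \<in> (\<Union>(X,Y)\<in>S. X \<times> Y)}"])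
    show "finite (Pow Q)" using fQ by simp
    fix u
    have "\<sigma> u \<subseteq> Q"
    proof
      fix p assume "p \<in> \<sigma> u"
      then obtain U V where UV: "(U,V) \<in> F" "p = (lquot (pi_i u) U, lquot (pi_o u) V)"
        unfolding \<sigma>_def by auto
      show "p \<in> Q" unfolding Q_def
        by (rule UN_I[of "(U,V)"]) (use UV in auto)
    qed
    then show "\<sigma> u \<in> Pow Q" by simp
    have "pquot (pi_i u) (pi_o u) \<rho> = (\<Union>(X,Y)\<in>\<sigma> u. X \<times> Y)"
      unfolding F(3) pquot_UN \<sigma>_def by auto
    then show "lquot u {z. sem z \<in> \<rho>} = {z. sem z \<in> (\<Union>(X,Y)\<in>\<sigma> u. X \<times> Y)}"
      unfolding lquot_sem_set by simp
  qed
qed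



lemma pi_map_Inl[simp]: "pi_i (map Inl s) = s" "pi_o (map Inl s) = []"
  by (simp_all add: pi_i_def pi_o_def comp_def)

lemma pi_map_Inr[simp]: "pi_i (map Inr t) = []" "pi_o (map Inr t) = t"
  by (simp_all add: pi_i_def pi_o_def comp_def)

lemma sem_Nil[simp]: "sem [] = ([], [])" by (simp add: sem_def pi_i_def pi_o_def)

lemma regular_hd: "regular {y. y = [] \<or> P (hd y)}"
proof (rule regular_quot_finite_in[where \<sigma>="\<lambda>t. lquot t {y. y = [] \<or> P (hd y)}" and G=id
      and U="{{y. y = [] \<or> P (hd y)}, UNIV, {}}"])
  fix t
  show "lquot t {y. y = [] \<or> P (hd y)} \<in> {{y. y = [] \<or> P (hd y)}, UNIV, {}}"
  proof (cases t)
    case Nil then show ?thesis by simp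
  next
    case (Cons a t')
    then have "lquot t {y. y = [] \<or> P (hd y)} = (if P a then UNIV else {})" unfolding lquot_def by auto
    then show ?thesis by simp
  qed
qed simp_all

definition Ul :: "('s,'g) word set \<Rightarrow> ('s,'g) word set \<Rightarrow> 's list set" where
  "Ul L K = {s. s \<noteq> [] \<and> lquot (map Inl s) L = K}"
definition Vr :: "('s,'g) word set \<Rightarrow> ('s,'g) word set \<Rightarrow> 'g list set" where
  "Vr L K = {t. t \<noteq> [] \<and> lquot (map Inr t) L = K}"
definition Hl :: "('s,'g) word set" where "Hl = {y. y = [] \<or> \<not> isl (hd y)}"
definition Hr :: "('s,'g) word set" where "Hr = {y. y = [] \<or> isl (hd y)}"
definition QLl :: "('s,'g) word set \<Rightarrow> ('s,'g) word set set" where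
  "QLl L = {lquot (map Inl s) L | s. s \<noteq> []}"
definition QLr :: "('s,'g) word set \<Rightarrow> ('s,'g) word set set" where
  "QLr L = {lquot (map Inr t) L | t. t \<noteq> []}"

lemma regular_Ul: assumes "regular L" shows "regular (Ul L K)"
proof (rule regular_quot_finite_in[where \<sigma>="\<lambda>t. (t = [], lquot (map Inl t) L)"
      and U="{True, False} \<times> range (\<lambda>x. lquot x L)"
      and G="\<lambda>(b, L'). {s. (\<not> b \<or> s \<noteq> []) \<and> lquot (map Inl s) L' = K}"])
  show "finite ({True, False} \<times> range (\<lambda>x. lquot x L))" using assms unfolding regular_iff
    by (intro finite_cartesian_product) auto
  fix t
  show "lquot t (Ul L K) = (\<lambda>(b, L'). {s. (\<not> b \<or> s \<noteq> []) \<and> lquot (map Inl s) L' = K}) (t = [], lquot (map Inl t) L)"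
    unfolding Ul_def lquot_def by auto
qed auto

lemma regular_Vr: assumes "regular L" shows "regular (Vr L K)"
proof (rule regular_quot_finite_in[where \<sigma>="\<lambda>t. (t = [], lquot (map Inr t) L)"
      and U="{True, False} \<times> range (\<lambda>x. lquot x L)"
      and G="\<lambda>(b, L'). {s. (\<not> b \<or> s \<noteq> []) \<and> lquot (map Inr s) L' = K}"])
  show "finite ({True, False} \<times> range (\<lambda>x. lquot x L))" using assms unfolding regular_iff
    by (intro finite_cartesian_product) auto
  fix t
  show "lquot t (Vr L K) = (\<lambda>(b, L'). {s. (\<not> b \<or> s \<noteq> []) \<and> lquot (map Inr s) L' = K}) (t = [], lquot (map Inr t) L)"
    unfolding Vr_def lquot_def by auto
qed auto

lemma finite_QLl: "regular L \<Longrightarrow> finite (QLl L)"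
  unfolding regular_iff QLl_def by (rule finite_subset[rotated]) auto

lemma finite_QLr: "regular L \<Longrightarrow> finite (QLr L)"
  unfolding regular_iff QLr_def by (rule finite_subset[rotated]) auto

lemma map_Inl_projl: "\<forall>a\<in>set x. isl a \<Longrightarrow> map Inl (map projl x) = x"
  by (induction x) auto

lemma map_Inr_projr: "\<forall>a\<in>set x. \<not> isl a \<Longrightarrow> map Inr (map projr x) = x"
  by (induction x) auto

lemma sem_decomp:
  "sem ` L = sem ` (L \<inter> {[]}) \<union> (\<Union>K\<in>QLl L. cat (Ul L K \<times> {[]}) (sem ` (K \<inter> Hl)))
      \<union> (\<Union>K\<in>QLr L. cat ({[]} \<times> Vr L K) (sem ` (K \<inter> Hr)))"
proof (intro set_eqI iffI)
  fix p assume "p \<in> sem ` L"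
  then obtain z where z: "z \<in> L" "p = sem z" by blast
  show "p \<in> sem ` (L \<inter> {[]}) \<union> (\<Union>K\<in>QLl L. cat (Ul L K \<times> {[]}) (sem ` (K \<inter> Hl)))
      \<union> (\<Union>K\<in>QLr L. cat ({[]} \<times> Vr L K) (sem ` (K \<inter> Hr)))"
  proof (cases z)
    case Nil
    then have "p \<in> sem ` (L \<inter> {[]})" using z by simp
    then show ?thesis by (intro UnI1)
  next
    case (Cons a z')
    show ?thesis
    proof (cases "isl a")
      case True
      define x where "x = takeWhile isl z"
      define y where "y = dropWhile isl z"
      define s where "s = map projl x"
      have xall: "\<forall>c\<in>set x. isl c" unfolding x_def by (auto dest: set_takeWhileD)
      have xs: "map Inl s = x" unfolding s_def using xall by (rule map_Inl_projl)
      have sne: "s \<noteq> []" unfolding s_def x_def using Cons True by simp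
      have zxy: "x @ y = z" unfolding x_def y_def by simp
      define K where "K = lquot (map Inl s) L"
      have KQ: "K \<in> QLl L" unfolding K_def QLl_def using sne by blast
      have yK: "y \<in> K" unfolding K_def lquot_def xs using z(1) zxy by simp
      have yH: "y \<in> Hl" unfolding Hl_def y_def using hd_dropWhile[of isl z] by auto
      have sU: "(s, []) \<in> Ul L K \<times> {[]}" unfolding Ul_def K_def using sne by simp
      have "sem y \<in> sem ` (K \<inter> Hl)" using yK yH by blast
      then have "(s @ pi_i y, [] @ pi_o y) \<in> cat (Ul L K \<times> {[]}) (sem ` (K \<inter> Hl))"
        using sU catI[of s "[]" _ "pi_i y" "pi_o y"] by (simp add: sem_def)
      moreover have "p = (s @ pi_i y, [] @ pi_o y)"
        unfolding z(2) zxy[symmetric] xs[symmetric] by (simp add: sem_def)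
      ultimately have "p \<in> cat (Ul L K \<times> {[]}) (sem ` (K \<inter> Hl))" by simp
      then show ?thesis by (intro UnI1 UnI2 UN_I[OF KQ])
    next
      case False
      define x where "x = takeWhile (\<lambda>c. \<not> isl c) z"
      define y where "y = dropWhile (\<lambda>c. \<not> isl c) z"
      define t where "t = map projr x"
      have xall: "\<forall>c\<in>set x. \<not> isl c" unfolding x_def by (auto dest: set_takeWhileD)
      have xs: "map Inr t = x" unfolding t_def using xall by (rule map_Inr_projr)
      have sne: "t \<noteq> []" unfolding t_def x_def using Cons False by simp
      have zxy: "x @ y = z" unfolding x_def y_def by simp
      define K where "K = lquot (map Inr t) L"
      have KQ: "K \<in> QLr L" unfolding K_def QLr_def using sne by blast
      have yK: "y \<in> K" unfolding K_def lquot_def xs using z(1) zxy by simp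
      have yH: "y \<in> Hr" unfolding Hr_def y_def using hd_dropWhile[of "\<lambda>c. \<not> isl c" z] by auto
      have sU: "([], t) \<in> {[]} \<times> Vr L K" unfolding Vr_def K_def using sne by simp
      have "sem y \<in> sem ` (K \<inter> Hr)" using yK yH by blast
      then have "([] @ pi_i y, t @ pi_o y) \<in> cat ({[]} \<times> Vr L K) (sem ` (K \<inter> Hr))"
        using sU catI[of "[]" t _ "pi_i y" "pi_o y"] by (simp add: sem_def)
      moreover have "p = ([] @ pi_i y, t @ pi_o y)"
        unfolding z(2) zxy[symmetric] xs[symmetric] by (simp add: sem_def)
      ultimately have "p \<in> cat ({[]} \<times> Vr L K) (sem ` (K \<inter> Hr))" by simp
      then show ?thesis by (intro UnI2 UN_I[OF KQ])
    qed
  qed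
next
  fix p assume p: "p \<in> sem ` (L \<inter> {[]}) \<union> (\<Union>K\<in>QLl L. cat (Ul L K \<times> {[]}) (sem ` (K \<inter> Hl)))
      \<union> (\<Union>K\<in>QLr L. cat ({[]} \<times> Vr L K) (sem ` (K \<inter> Hr)))"
  consider (a) "p \<in> sem ` (L \<inter> {[]})" | (b) K where "p \<in> cat (Ul L K \<times> {[]}) (sem ` (K \<inter> Hl))"
    | (c) K where "p \<in> cat ({[]} \<times> Vr L K) (sem ` (K \<inter> Hr))"
    using p by (elim UnE UN_E) blast+
  then show "p \<in> sem ` L"
  proof cases
    case a then show ?thesis by blast
  next
    case (b K)
    then obtain a b c d where h: "p = (a @ c, b @ d)" "(a, b) \<in> Ul L K \<times> {[]}" "(c, d) \<in> sem ` (K \<inter> Hl)"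
      by (rule catE)
    then obtain y where y: "y \<in> K" "(c, d) = sem y" by blast
    have "map Inl a @ y \<in> L" using h(2) y(1) unfolding Ul_def lquot_def by auto
    moreover have "p = sem (map Inl a @ y)" using h y(2) by (auto simp: sem_def)
    ultimately show ?thesis by (rule rev_image_eqI)
  next
    case (c K)
    then obtain a b c d where h: "p = (a @ c, b @ d)" "(a, b) \<in> {[]} \<times> Vr L K" "(c, d) \<in> sem ` (K \<inter> Hr)"
      by (rule catE)
    then obtain y where y: "y \<in> K" "(c, d) = sem y" by blast
    have "map Inr b @ y \<in> L" using h(2) y(1) unfolding Vr_def lquot_def by auto
    moreover have "p = sem (map Inr b @ y)" using h y(2) by (auto simp: sem_def)
    ultimately show ?thesis by (rule rev_image_eqI)
  qed
qed

lemma REC_small: "REC (sem ` (A \<inter> {[]}))"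
proof (cases "[] \<in> A")
  case True
  then have "sem ` (A \<inter> {[]}) = {([], [])}" by auto
  then show ?thesis by (simp add: REC_single)
next
  case False
  then have "sem ` (A \<inter> {[]}) = {}" by auto
  then show ?thesis by (simp add: REC_empty)
qed

lemma REC_sem_step:
  fixes L :: "('s,'g) word set"
  assumes IH: "\<And>L' :: ('s,'g) word set. regular L' \<Longrightarrow> (\<forall>z\<in>L'. Suc (shift z) \<le> C) \<Longrightarrow> REC (sem ` L')"
    and reg: "regular L" and bnd: "\<forall>z\<in>L. shift z \<le> C"
  shows "REC (sem ` L)"
proof -
  have partl: "REC (sem ` (K \<inter> Hl))" if "K \<in> QLl L" for K
  proof -
    have "\<exists>s. K = lquot (map Inl s) L \<and> s \<noteq> []" using that unfolding QLl_def by simp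
    then obtain s where s: "s \<noteq> []" "K = lquot (map Inl s) L" by blast
    have "K \<inter> Hl = (K \<inter> Hl \<inter> {[]}) \<union> (K \<inter> Hl - {[]})" by blast
    then have "sem ` (K \<inter> Hl) = sem ` (K \<inter> Hl \<inter> {[]}) \<union> sem ` (K \<inter> Hl - {[]})"
      by (metis image_Un)
    moreover have "REC (sem ` (K \<inter> Hl - {[]}))"
    proof (rule IH)
      show "regular (K \<inter> Hl - {[]})" unfolding s(2) Hl_def
        by (intro regular_Diff regular_Int regular_lquot reg regular_hd regular_singleton)
      show "\<forall>z\<in>K \<inter> Hl - {[]}. Suc (shift z) \<le> C"
      proof
        fix z assume z: "z \<in> K \<inter> Hl - {[]}"
        then have zL: "map Inl s @ z \<in> L" using s(2) unfolding lquot_def by simp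
        have "\<not> isl (hd z)" using z unfolding Hl_def by auto
        then have "shift z + 1 \<le> shift (map Inl s @ z)"
          using s(1) z by (intro shift_append_gt) (auto simp: last_map)
        then show "Suc (shift z) \<le> C" using bnd zL by fastforce
      qed
    qed
    ultimately show ?thesis using REC_Un REC_small by metis
  qed
  have partr: "REC (sem ` (K \<inter> Hr))" if "K \<in> QLr L" for K
  proof -
    have "\<exists>s. K = lquot (map Inr s) L \<and> s \<noteq> []" using that unfolding QLr_def by simp
    then obtain s where s: "s \<noteq> []" "K = lquot (map Inr s) L" by blast
    have "K \<inter> Hr = (K \<inter> Hr \<inter> {[]}) \<union> (K \<inter> Hr - {[]})" by blast
    then have "sem ` (K \<inter> Hr) = sem ` (K \<inter> Hr \<inter> {[]}) \<union> sem ` (K \<inter> Hr - {[]})"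
      by (metis image_Un)
    moreover have "REC (sem ` (K \<inter> Hr - {[]}))"
    proof (rule IH)
      show "regular (K \<inter> Hr - {[]})" unfolding s(2) Hr_def
        by (intro regular_Diff regular_Int regular_lquot reg regular_hd regular_singleton)
      show "\<forall>z\<in>K \<inter> Hr - {[]}. Suc (shift z) \<le> C"
      proof
        fix z assume z: "z \<in> K \<inter> Hr - {[]}"
        then have zL: "map Inr s @ z \<in> L" using s(2) unfolding lquot_def by simp
        have "isl (hd z)" using z unfolding Hr_def by auto
        then have "shift z + 1 \<le> shift (map Inr s @ z)"
          using s(1) z by (intro shift_append_gt) (auto simp: last_map)
        then show "Suc (shift z) \<le> C" using bnd zL by fastforce
      qed
    qed
    ultimately show ?thesis using REC_Un REC_small by metis
  qed
  have "REC (\<Union>K\<in>QLl L. cat (Ul L K \<times> {[]}) (sem ` (K \<inter> Hl)))"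
    by (rule REC_UN[OF finite_QLl[OF reg]])
       (intro REC_cat REC_prod regular_Ul reg regular_singleton partl, assumption)
  moreover have "REC (\<Union>K\<in>QLr L. cat ({[]} \<times> Vr L K) (sem ` (K \<inter> Hr)))"
    by (rule REC_UN[OF finite_QLr[OF reg]])
       (intro REC_cat REC_prod regular_Vr reg regular_singleton partr, assumption)
  ultimately show ?thesis
    by (subst sem_decomp) (intro REC_Un REC_small)
qed

lemma REC_sem_bound:
  fixes L :: "('s,'g) word set"
  shows "regular L \<Longrightarrow> \<forall>z\<in>L. shift z \<le> C \<Longrightarrow> REC (sem ` L)"
proof (induction C arbitrary: L)
  case 0
  show ?case
  proof (rule REC_sem_step[OF _ 0(1,2)])
    fix L' :: "('s,'g) word set" assume "\<forall>z\<in>L'. Suc (shift z) \<le> 0"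
    then have "L' = {}" by auto
    then show "REC (sem ` L')" by (simp add: REC_empty)
  qed
next
  case (Suc C)
  show ?case
  proof (rule REC_sem_step[OF _ Suc(2,3)])
    fix L' :: "('s,'g) word set" assume "regular L'" "\<forall>z\<in>L'. Suc (shift z) \<le> Suc C"
    then show "REC (sem ` L')" using Suc.IH by simp
  qed
qed

lemma REC_sem:
  fixes L :: "('s,'g) word set"
  assumes "regular L" "finite_shift L" shows "REC (sem ` L)"
  using assms REC_sem_bound unfolding finite_shift_iff by blast



definition dl :: "'a list \<Rightarrow> 'a list \<Rightarrow> 'a list" where "dl a b = drop (length b) a"

definition compat :: "('s,'g) word \<Rightarrow> ('s,'g) word \<Rightarrow> bool" where
  "compat u v \<longleftrightarrow> (prefix (pi_i u) (pi_i v) \<or> prefix (pi_i v) (pi_i u)) \<and>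
                   (prefix (pi_o u) (pi_o v) \<or> prefix (pi_o v) (pi_o u))"

definition DD :: "('s,'g) word \<Rightarrow> ('s,'g) word \<Rightarrow> 's list \<times> 's list \<times> 'g list \<times> 'g list" where
  "DD u v = (dl (pi_i u) (pi_i v), dl (pi_i v) (pi_i u), dl (pi_o u) (pi_o v), dl (pi_o v) (pi_o u))"

fun MatchD :: "'s list \<times> 's list \<times> 'g list \<times> 'g list \<Rightarrow> ('s,'g) word \<Rightarrow> ('s,'g) word \<Rightarrow> bool" where
  "MatchD (eu, ev, fu, fv) r z \<longleftrightarrow> ev @ pi_i r = eu @ pi_i z \<and> fv @ pi_o r = fu @ pi_o z"

definition Dset :: "nat \<Rightarrow> ('s list \<times> 's list \<times> 'g list \<times> 'g list) set" where
  "Dset n = {xs. length xs \<le> n} \<times> {xs. length xs \<le> n} \<times> {xs. length xs \<le> n} \<times> {xs. length xs \<le> n}"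

lemma finite_len_le: "finite {xs :: ('a::finite) list. length xs \<le> n}"
  using finite_lists_length_le[of "UNIV :: 'a set" n] by simp

lemma finite_Dset: "finite (Dset n :: (('s::finite) list \<times> 's list \<times> ('g::finite) list \<times> 'g list) set)"
  unfolding Dset_def by (intro finite_cartesian_product finite_len_le)

lemma list_cancel:
  assumes "prefix a b \<or> prefix b a"
  shows "b @ R = a @ Z \<longleftrightarrow> dl b a @ R = dl a b @ Z"
  using assms
proof
  assume "prefix a b"
  then obtain e where b: "b = a @ e" by (auto simp: prefix_def)
  then show ?thesis unfolding dl_def by simp
next
  assume "prefix b a"
  then obtain e where a: "a = b @ e" by (auto simp: prefix_def)
  then show ?thesis unfolding dl_def by simp
qed

lemma sem_match:
  assumes "compat u v"
  shows "sem (v @ r) = sem (u @ z) \<longleftrightarrow> MatchD (DD u v) r z"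
proof -
  have i: "pi_i v @ pi_i r = pi_i u @ pi_i z \<longleftrightarrow> dl (pi_i v) (pi_i u) @ pi_i r = dl (pi_i u) (pi_i v) @ pi_i z"
    using assms unfolding compat_def by (intro list_cancel) blast
  have o: "pi_o v @ pi_o r = pi_o u @ pi_o z \<longleftrightarrow> dl (pi_o v) (pi_o u) @ pi_o r = dl (pi_o u) (pi_o v) @ pi_o z"
    using assms unfolding compat_def by (intro list_cancel) blast
  show ?thesis unfolding DD_def MatchD.simps sem_append using i o by simp
qed

lemma sem_compat:
  assumes "sem (v @ r) = sem (u @ z)"
  shows "compat u v"
proof -
  have e1: "pi_i v @ pi_i r = pi_i u @ pi_i z" and e2: "pi_o v @ pi_o r = pi_o u @ pi_o z"
    using assms unfolding sem_append by auto
  have "prefix (pi_i u) (pi_i u @ pi_i z)" "prefix (pi_i v) (pi_i u @ pi_i z)"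
    using e1 by (metis prefix_def)+
  then have "prefix (pi_i u) (pi_i v) \<or> prefix (pi_i v) (pi_i u)" by (rule prefix_same_cases)
  moreover have "prefix (pi_o u) (pi_o u @ pi_o z)" "prefix (pi_o v) (pi_o u @ pi_o z)"
    using e2 by (metis prefix_def)+
  then have "prefix (pi_o u) (pi_o v) \<or> prefix (pi_o v) (pi_o u)" by (rule prefix_same_cases)
  ultimately show ?thesis unfolding compat_def by blast
qed

lemma DD_bound:
  assumes "length u = length v" "lagw u \<le> int n" "lagw v \<le> int n"
  shows "DD u v \<in> Dset n"
proof -
  have s1: "cnt_i u + cnt_o u = cnt_i v + cnt_o v" using cnt_sum[of u] cnt_sum[of v] assms(1) by simp
  have a: "\<bar>int (cnt_i u) - int (cnt_o u)\<bar> \<le> int n" "\<bar>int (cnt_i v) - int (cnt_o v)\<bar> \<le> int n"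
    using assms(2,3) unfolding lagw_def by auto
  have "cnt_i u - cnt_i v \<le> n" "cnt_i v - cnt_i u \<le> n" "cnt_o u - cnt_o v \<le> n" "cnt_o v - cnt_o u \<le> n"
    using s1 a by linarith+
  then show ?thesis unfolding DD_def Dset_def dl_def by simp
qed

definition bad :: "('s,'g) word set \<Rightarrow> ('s,'g) word \<Rightarrow> bool" where
  "bad L x \<longleftrightarrow> \<not> finite_shift (lquot x L)"

lemma bad_append: "bad L (u @ x) = bad (lquot u L) x"
  unfolding bad_def by (simp add: lquot_append)

lemma bad_prefix: "bad L (x @ y) \<Longrightarrow> bad L x"
  unfolding bad_def using finite_shift_lquot_append by blast

lemma bad_take_mono: "bad L (take i w) \<Longrightarrow> j \<le> i \<Longrightarrow> bad L (take j w)"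
proof -
  assume "bad L (take i w)" "j \<le> i"
  moreover have "take i w = take j w @ drop j (take i w)"
    using \<open>j \<le> i\<close> by (metis append_take_drop_id min.absorb1 take_take)
  ultimately show ?thesis using bad_prefix by metis
qed

lemma bad_take: "bad L x \<Longrightarrow> bad L (take i x)"
  using bad_prefix[of L "take i x" "drop i x"] by simp

definition Cnd2 :: "bool \<Rightarrow> ('s,'g) word set \<Rightarrow> ('s,'g) word set \<Rightarrow> ('s,'g) word \<Rightarrow> ('s,'g) word \<Rightarrow> bool" where
  "Cnd2 st L1 L2 r z \<longleftrightarrow>
     (\<not> st \<and> (\<forall>i\<le>length z. bad L1 (take i r) \<and> bad L2 (take i z))) \<or>
     (\<exists>j\<le>length z. \<not> bad L1 (take j r) \<and> (\<forall>i<j. bad L1 (take i r) \<and> bad L2 (take i z)) \<and> (st \<longrightarrow> bad L2 (take j z)))"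

definition Zset :: "bool \<Rightarrow> ('s,'g) word set \<Rightarrow> ('s,'g) word set \<Rightarrow> ('s,'g) word set" where
  "Zset st T P = {w \<in> T. \<exists>m\<in>P. sem m = sem w \<and> Cnd2 st T T m w}"

definition Wf :: "('s,'g) word set \<Rightarrow> 's list \<times> 's list \<times> 'g list \<times> 'g list \<Rightarrow> ('s,'g) word set" where
  "Wf L D = {y. \<exists>r\<in>L. MatchD D r y}"

fun Fut :: "bool \<Rightarrow> ('s,'g) word set \<Rightarrow> ('s,'g) word set \<times> ('s,'g) word set \<times> ('s list \<times> 's list \<times> 'g list \<times> 'g list) \<Rightarrow> ('s,'g) word set" where
  "Fut st LTu (LP, LTv, D) = {z. \<exists>r\<in>LP. MatchD D r z \<and> Cnd2 st LTv LTu r z}"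

definition Acfg :: "('s,'g) word set \<Rightarrow> ('s,'g) word set \<Rightarrow> ('s,'g) word \<Rightarrow> _ set" where
  "Acfg T P u = {(lquot v P, lquot v T, DD u v) | v. length v = length u \<and> bad T v \<and> bad T u \<and> compat u v}"

definition Gset :: "bool \<Rightarrow> ('s,'g) word set \<Rightarrow> ('s,'g) word set \<Rightarrow> ('s,'g) word \<Rightarrow> ('s,'g) word set set" where
  "Gset st T P u = {lquot (drop j u) (Wf (lquot v0 P) (DD (take j u) v0)) | j v0.
      j \<le> length u \<and> length v0 = j \<and> \<not> bad T v0 \<and> (\<forall>i<j. bad T (take i v0) \<and> bad T (take i u)) \<and>
      (st \<longrightarrow> bad T (take j u)) \<and> compat (take j u) v0}"



lemma take_app_le: "i \<le> length u \<Longrightarrow> take i (u @ z) = take i u" by simp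
lemma take_app_plus: "take (length u + k) (u @ z) = u @ take k z" by simp

lemma Zset_sub:
  assumes z: "z \<in> lquot u (Zset st T P)"
  shows "z \<in> lquot u T \<inter> ((\<Union>c\<in>Acfg T P u. Fut st (lquot u T) c) \<union> \<Union>(Gset st T P u))"
proof -
  from z have uzT: "u @ z \<in> T" and "\<exists>m\<in>P. sem m = sem (u @ z) \<and> Cnd2 st T T m (u @ z)"
    unfolding lquot_def Zset_def by auto
  then obtain m where mP: "m \<in> P" and sm: "sem m = sem (u @ z)" and C: "Cnd2 st T T m (u @ z)" by blast
  have lm: "length m = length (u @ z)" using sm by (rule sem_length)
  define v where "v = take (length u) m"
  define r where "r = drop (length u) m"
  have mvr: "m = v @ r" unfolding v_def r_def by simp
  have lv: "length v = length u" unfolding v_def using lm by simp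
  have smv: "sem (v @ r) = sem (u @ z)" using sm mvr by simp
  have cuv: "compat u v" using smv by (rule sem_compat)
  have mt: "MatchD (DD u v) r z" using sem_match[OF cuv] smv by simp
  have rP: "r \<in> lquot v P" unfolding lquot_def using mP mvr by simp
  have zT: "z \<in> lquot u T" unfolding lquot_def using uzT by simp
  have tm: "take (length u + k) m = v @ take k r" for k unfolding mvr using lv by simp
  have tw: "take (length u + k) (u @ z) = u @ take k z" for k by simp
  have cfgA: "(lquot v P, lquot v T, DD u v) \<in> Acfg T P u" if "bad T v" "bad T u"
    unfolding Acfg_def using lv that cuv by blast
  from C consider (allbad) "\<not> st" "\<forall>i\<le>length (u @ z). bad T (take i m) \<and> bad T (take i (u @ z))"
    | (sw) j where "j \<le> length (u @ z)" "\<not> bad T (take j m)"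
        "\<forall>i<j. bad T (take i m) \<and> bad T (take i (u @ z))" "st \<longrightarrow> bad T (take j (u @ z))"
    unfolding Cnd2_def by blast
  then show ?thesis
  proof cases
    case allbad
    have bv: "bad T v" using allbad(2) tm[of 0] lv by (metis add_0_right le_add1 length_append take0 append_Nil2)
    have bu: "bad T u" using allbad(2) tw[of 0] by (metis add_0_right le_add1 length_append take0 append_Nil2)
    have "Cnd2 st (lquot v T) (lquot u T) r z"
      unfolding Cnd2_def
    proof (rule disjI1, intro conjI allI impI)
      show "\<not> st" by (rule allbad(1))
      fix i assume "i \<le> length z"
      then have "length u + i \<le> length (u @ z)" by simp
      then have "bad T (take (length u + i) m) \<and> bad T (take (length u + i) (u @ z))" using allbad(2) by blast
      then show "bad (lquot v T) (take i r)" "bad (lquot u T) (take i z)"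
        unfolding tm tw bad_append by auto
    qed
    then have "z \<in> Fut st (lquot u T) (lquot v P, lquot v T, DD u v)" using rP mt by auto
    then show ?thesis using zT cfgA[OF bv bu] by blast
  next
    case (sw j)
    show ?thesis
    proof (cases "j \<le> length u")
      case True
      define v0 where "v0 = take j m"
      have lv0: "length v0 = j" unfolding v0_def using lm True by simp
      have m0: "m = v0 @ drop j m" unfolding v0_def by simp
      have u0: "u @ z = take j u @ (drop j u @ z)" by simp
      have s0: "sem (v0 @ drop j m) = sem (take j u @ (drop j u @ z))" using sm m0 u0 by simp
      have c0: "compat (take j u) v0" using s0 by (rule sem_compat)
      have mt0: "MatchD (DD (take j u) v0) (drop j m) (drop j u @ z)" using sem_match[OF c0] s0 by simp
      have rP0: "drop j m \<in> lquot v0 P" unfolding lquot_def using mP m0 by simp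
      have "lquot (drop j u) (Wf (lquot v0 P) (DD (take j u) v0)) \<in> Gset st T P u"
        unfolding Gset_def
      proof (rule CollectI, rule exI[of _ j], rule exI[of _ v0], intro conjI refl)
        show "j \<le> length u" by (rule True)
        show "length v0 = j" by (rule lv0)
        show "\<not> bad T v0" using sw(2) unfolding v0_def .
        show "\<forall>i<j. bad T (take i v0) \<and> bad T (take i u)"
        proof (intro allI impI)
          fix i assume "i < j"
          then have h: "bad T (take i m) \<and> bad T (take i (u @ z))" using sw(3) by blast
          have e1: "take i v0 = take i m" unfolding v0_def using \<open>i < j\<close> by simp
          have e2: "take i (u @ z) = take i u" using \<open>i < j\<close> True by simp
          show "bad T (take i v0) \<and> bad T (take i u)" using h unfolding e1 e2 .
        qed
        show "st \<longrightarrow> bad T (take j u)" using sw(4) True by simp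
        show "compat (take j u) v0" by (rule c0)
      qed
      moreover have "z \<in> lquot (drop j u) (Wf (lquot v0 P) (DD (take j u) v0))"
      proof -
        have "drop j u @ z \<in> Wf (lquot v0 P) (DD (take j u) v0)" unfolding Wf_def using rP0 mt0 by blast
        then show ?thesis unfolding lquot_def by simp
      qed
      ultimately show ?thesis using zT by blast
    next
      case False
      define j' where "j' = j - length u"
      have jj: "j = length u + j'" unfolding j'_def using False by simp
      have bv: "bad T v" and bu: "bad T u"
      proof -
        have "length u < j" using False by simp
        then have "bad T (take (length u) m) \<and> bad T (take (length u) (u @ z))" using sw(3) by blast
        then show "bad T v" "bad T u" unfolding v_def by simp_all
      qed
      have "Cnd2 st (lquot v T) (lquot u T) r z"
        unfolding Cnd2_def
      proof (rule disjI2, rule exI[of _ j'], intro conjI allI impI)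
        show "j' \<le> length z" using sw(1) jj by simp
        show "\<not> bad (lquot v T) (take j' r)" using sw(2) unfolding jj tm bad_append .
        fix i assume "i < j'"
        then have "length u + i < j" using jj by simp
        then have "bad T (take (length u + i) m) \<and> bad T (take (length u + i) (u @ z))" using sw(3) by blast
        then show "bad (lquot v T) (take i r)" "bad (lquot u T) (take i z)"
          unfolding tm tw bad_append by auto
      next
        assume st
        then show "bad (lquot u T) (take j' z)" using sw(4) unfolding jj tw bad_append by simp
      qed
      then have "z \<in> Fut st (lquot u T) (lquot v P, lquot v T, DD u v)" using rP mt by auto
      then show ?thesis using zT cfgA[OF bv bu] by blast
    qed
  qed
qed



lemma Zset_sup:
  assumes zT: "z \<in> lquot u T"
    and z: "z \<in> (\<Union>c\<in>Acfg T P u. Fut st (lquot u T) c) \<union> \<Union>(Gset st T P u)"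
  shows "z \<in> lquot u (Zset st T P)"
proof -
  have uzT: "u @ z \<in> T" using zT unfolding lquot_def by simp
  have "\<exists>m\<in>P. sem m = sem (u @ z) \<and> Cnd2 st T T m (u @ z)"
  proof -
    from z consider (A) c where "c \<in> Acfg T P u" "z \<in> Fut st (lquot u T) c"
      | (G) K where "K \<in> Gset st T P u" "z \<in> K" by blast
    then show ?thesis
    proof cases
      case A
      have "\<exists>v. c = (lquot v P, lquot v T, DD u v) \<and> length v = length u \<and> bad T v \<and> bad T u \<and> compat u v"
        using A(1) unfolding Acfg_def by simp
      then obtain v where v: "c = (lquot v P, lquot v T, DD u v)" "length v = length u" "bad T v" "bad T u" "compat u v"
        by (elim exE conjE)
      obtain r where r: "r \<in> lquot v P" "MatchD (DD u v) r z" "Cnd2 st (lquot v T) (lquot u T) r z"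
        using A(2) unfolding v(1) by auto
      define m where "m = v @ r"
      have mP: "m \<in> P" using r(1) unfolding m_def lquot_def by simp
      have sm: "sem m = sem (u @ z)" unfolding m_def using sem_match[OF v(5)] r(2) by simp
      have tm: "take (length u + k) m = v @ take k r" for k unfolding m_def using v(2) by simp
      have tw: "take (length u + k) (u @ z) = u @ take k z" for k by simp
      have low: "bad T (take i m) \<and> bad T (take i (u @ z))" if "i \<le> length u" for i
      proof -
        have e1: "take i m = take i v" unfolding m_def using that v(2) by simp
        have e2: "take i (u @ z) = take i u" using that by simp
        show ?thesis unfolding e1 e2 using bad_take[OF v(3)] bad_take[OF v(4)] by blast
      qed
      have "Cnd2 st T T m (u @ z)"
        using r(3)[unfolded Cnd2_def]
      proof (elim disjE exE conjE)
        assume nst: "\<not> st" and ab: "\<forall>i\<le>length z. bad (lquot v T) (take i r) \<and> bad (lquot u T) (take i z)"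
        have "\<forall>i\<le>length (u @ z). bad T (take i m) \<and> bad T (take i (u @ z))"
        proof (intro allI impI)
          fix i assume i: "i \<le> length (u @ z)"
          show "bad T (take i m) \<and> bad T (take i (u @ z))"
          proof (cases "i \<le> length u")
            case True then show ?thesis by (rule low)
          next
            case False
            define k where "k = i - length u"
            have ik: "i = length u + k" unfolding k_def using False by simp
            have "k \<le> length z" using i ik by simp
            then have "bad (lquot v T) (take k r) \<and> bad (lquot u T) (take k z)" using ab by blast
            then show ?thesis unfolding ik tm tw bad_append .
          qed
        qed
        then show ?thesis using nst unfolding Cnd2_def by (intro disjI1 conjI)
      next
        fix j' assume j': "j' \<le> length z" "\<not> bad (lquot v T) (take j' r)"
          "\<forall>i<j'. bad (lquot v T) (take i r) \<and> bad (lquot u T) (take i z)"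
          "st \<longrightarrow> bad (lquot u T) (take j' z)"
        define j where "j = length u + j'"
        have "j \<le> length (u @ z)" unfolding j_def using j'(1) by simp
        moreover have "\<not> bad T (take j m)" unfolding j_def tm bad_append by (rule j'(2))
        moreover have "\<forall>i<j. bad T (take i m) \<and> bad T (take i (u @ z))"
        proof (intro allI impI)
          fix i assume i: "i < j"
          show "bad T (take i m) \<and> bad T (take i (u @ z))"
          proof (cases "i \<le> length u")
            case True then show ?thesis by (rule low)
          next
            case False
            define k where "k = i - length u"
            have ik: "i = length u + k" unfolding k_def using False by simp
            have "k < j'" using i ik unfolding j_def by simp
            then have "bad (lquot v T) (take k r) \<and> bad (lquot u T) (take k z)" using j'(3) by blast
            then show ?thesis unfolding ik tm tw bad_append .
          qed
        qed
        moreover have "st \<longrightarrow> bad T (take j (u @ z))" unfolding j_def tw bad_append by (rule j'(4))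
        ultimately show ?thesis unfolding Cnd2_def by (intro disjI2 exI[of _ j] conjI)
      qed
      then show ?thesis using mP sm by blast
    next
      case G
      obtain j v0 where g: "K = lquot (drop j u) (Wf (lquot v0 P) (DD (take j u) v0))"
        "j \<le> length u" "length v0 = j" "\<not> bad T v0" "\<forall>i<j. bad T (take i v0) \<and> bad T (take i u)"
        "st \<longrightarrow> bad T (take j u)" "compat (take j u) v0"
      proof -
        have "\<exists>j v0. K = lquot (drop j u) (Wf (lquot v0 P) (DD (take j u) v0)) \<and>
          j \<le> length u \<and> length v0 = j \<and> \<not> bad T v0 \<and> (\<forall>i<j. bad T (take i v0) \<and> bad T (take i u)) \<and>
          (st \<longrightarrow> bad T (take j u)) \<and> compat (take j u) v0"
          using G(1) unfolding Gset_def by simp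
        then show ?thesis using that by (elim exE conjE)
      qed
      have "drop j u @ z \<in> Wf (lquot v0 P) (DD (take j u) v0)" using G(2) g(1) unfolding lquot_def by simp
      then obtain r where r: "r \<in> lquot v0 P" "MatchD (DD (take j u) v0) r (drop j u @ z)"
        unfolding Wf_def by blast
      define m where "m = v0 @ r"
      have mP: "m \<in> P" using r(1) unfolding m_def lquot_def by simp
      have "sem m = sem (take j u @ (drop j u @ z))" unfolding m_def using sem_match[OF g(7)] r(2) by simp
      moreover have "take j u @ (drop j u @ z) = u @ z" by (metis append_assoc append_take_drop_id)
      ultimately have sm: "sem m = sem (u @ z)" by simp
      have "Cnd2 st T T m (u @ z)"
        unfolding Cnd2_def
      proof (rule disjI2, rule exI[of _ j], intro conjI allI impI)
        show "j \<le> length (u @ z)" using g(2) by simp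
        show "\<not> bad T (take j m)" unfolding m_def using g(3,4) by simp
        fix i assume i: "i < j"
        have e1: "take i m = take i v0" unfolding m_def using i g(3) by simp
        have e2: "take i (u @ z) = take i u" using i g(2) by simp
        show "bad T (take i m)" "bad T (take i (u @ z))" unfolding e1 e2 using g(5) i by blast+
      next
        assume st
        then show "bad T (take j (u @ z))" using g(6) g(2) by simp
      qed
      then show ?thesis using mP sm by blast
    qed
  qed
  then show ?thesis using uzT unfolding lquot_def Zset_def by simp
qed

lemma lquot_Zset:
  "lquot u (Zset st T P) = lquot u T \<inter> ((\<Union>c\<in>Acfg T P u. Fut st (lquot u T) c) \<union> \<Union>(Gset st T P u))"
proof (rule set_eqI, rule iffI)
  fix z assume "z \<in> lquot u (Zset st T P)"
  then show "z \<in> lquot u T \<inter> ((\<Union>c\<in>Acfg T P u. Fut st (lquot u T) c) \<union> \<Union>(Gset st T P u))"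
    by (rule Zset_sub)
next
  fix z assume h: "z \<in> lquot u T \<inter> ((\<Union>c\<in>Acfg T P u. Fut st (lquot u T) c) \<union> \<Union>(Gset st T P u))"
  show "z \<in> lquot u (Zset st T P)"
    by (rule Zset_sup) (use h in auto)
qed



lemma Wf_eq: "Wf L (eu, ev, fu, fv) = {y. sem y \<in> pquot eu fu (cat {(ev, fv)} (sem ` L))}"
proof (intro set_eqI iffI)
  fix y assume "y \<in> Wf L (eu, ev, fu, fv)"
  then obtain r where r: "r \<in> L" "ev @ pi_i r = eu @ pi_i y" "fv @ pi_o r = fu @ pi_o y"
    unfolding Wf_def by auto
  have "(ev @ pi_i r, fv @ pi_o r) \<in> cat {(ev, fv)} (sem ` L)"
    using r(1) by (intro catI) (auto simp: sem_def)
  then show "y \<in> {y. sem y \<in> pquot eu fu (cat {(ev, fv)} (sem ` L))}"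
    unfolding pquot_def sem_def using r(2,3) by simp
next
  fix y assume "y \<in> {y. sem y \<in> pquot eu fu (cat {(ev, fv)} (sem ` L))}"
  then have "(eu @ pi_i y, fu @ pi_o y) \<in> cat {(ev, fv)} (sem ` L)"
    unfolding pquot_def sem_def by simp
  then obtain a b c d where h: "(eu @ pi_i y, fu @ pi_o y) = (a @ c, b @ d)" "(a, b) \<in> {(ev, fv)}" "(c, d) \<in> sem ` L"
    by (rule catE)
  then obtain r where r: "r \<in> L" "(c, d) = sem r" by blast
  have "ev @ pi_i r = eu @ pi_i y" "fv @ pi_o r = fu @ pi_o y" using h r(2) by (auto simp: sem_def)
  then show "y \<in> Wf L (eu, ev, fu, fv)" unfolding Wf_def using r(1) by auto
qed

lemma regular_Wf:
  assumes "regular L" "finite_shift L"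
  shows "regular (Wf L D)"
proof -
  obtain eu ev fu fv where D: "D = (eu, ev, fu, fv)" by (cases D) auto
  show ?thesis unfolding D Wf_eq
    by (intro REC_regular REC_pquot REC_cat REC_single REC_sem assms)
qed

lemma lagw_Nil: "lagw [] = 0" by (simp add: lagw_def cnt_i_def cnt_o_def)

lemma lag_pre:
  assumes B: "\<forall>x. bad T x \<longrightarrow> lagw x \<le> int B" and h: "\<forall>i<j. bad T (take i x)"
  shows "lagw (take j x) \<le> int (B + 1)"
proof (cases j)
  case 0 then show ?thesis by (simp add: lagw_Nil)
next
  case (Suc k)
  then have "bad T (take k x)" using h by simp
  then have "lagw (take k x) \<le> int B" using B by blast
  then show ?thesis using lagw_take_Suc[of k x] Suc by simp
qed

lemma regular_Zset:
  fixes T P :: "('s::finite, 'g::finite) word set"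
  assumes regT: "regular T" and regP: "regular P" and PT: "P \<subseteq> T"
    and B: "\<forall>x. bad T x \<longrightarrow> lagw x \<le> int B"
  shows "regular (Zset st T P)"
proof -
  define UA where "UA = range (\<lambda>x. lquot x P) \<times> range (\<lambda>x. lquot x T) \<times> (Dset B :: ('s list \<times> 's list \<times> 'g list \<times> 'g list) set)"
  define Wfam where "Wfam = (\<lambda>(L, D). Wf L D) ` ({L \<in> range (\<lambda>x. lquot x P). finite_shift L} \<times> (Dset (B + 1) :: ('s list \<times> 's list \<times> 'g list \<times> 'g list) set))"
  define UG where "UG = (\<Union>W\<in>Wfam. range (\<lambda>x. lquot x W))"
  have fUA: "finite UA" unfolding UA_def using regT regP
    by (intro finite_cartesian_product finite_Dset) (simp_all add: regular_iff)
  have fWfam: "finite Wfam" unfolding Wfam_def using regP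
    by (intro finite_imageI finite_cartesian_product finite_Dset) (simp_all add: regular_iff)
  have regW: "regular W" if "W \<in> Wfam" for W
  proof -
    from that obtain p where p: "p \<in> {L \<in> range (\<lambda>x. lquot x P). finite_shift L} \<times> (Dset (B + 1) :: ('s list \<times> 's list \<times> 'g list \<times> 'g list) set)"
      "W = (\<lambda>(L, D). Wf L D) p" unfolding Wfam_def by (rule imageE)
    obtain L D where pLD: "p = (L, D)" by (cases p)
    have LD: "W = Wf L D" "L \<in> range (\<lambda>x. lquot x P)" "finite_shift L" using p unfolding pLD by auto
    then obtain x where "L = lquot x P" by blast
    then have "regular L" using regP regular_lquot by blast
    then show ?thesis unfolding LD(1) using LD(3) by (rule regular_Wf)
  qed
  have fUG: "finite UG" unfolding UG_def
    by (rule finite_UN_I[OF fWfam]) (use regW in \<open>simp add: regular_iff\<close>)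
  show ?thesis
  proof (rule regular_quot_finite_in[where \<sigma>="\<lambda>u. (lquot u T, Acfg T P u, Gset st T P u)"
        and U="range (\<lambda>x. lquot x T) \<times> Pow UA \<times> Pow UG"
        and G="\<lambda>(LT, A, Gs). LT \<inter> ((\<Union>c\<in>A. Fut st LT c) \<union> \<Union>Gs)"])
    show "finite (range (\<lambda>x. lquot x T) \<times> Pow UA \<times> Pow UG)"
      using regT fUA fUG by (simp add: regular_iff)
  next
    fix u
    show "lquot u (Zset st T P) = (\<lambda>(LT, A, Gs). LT \<inter> ((\<Union>c\<in>A. Fut st LT c) \<union> \<Union>Gs)) (lquot u T, Acfg T P u, Gset st T P u)"
      by (simp add: lquot_Zset)
  next
    fix u
    have "Acfg T P u \<subseteq> UA"
    proof
      fix c assume "c \<in> Acfg T P u"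
      then have "\<exists>v. c = (lquot v P, lquot v T, DD u v) \<and> length v = length u \<and> bad T v \<and> bad T u \<and> compat u v"
        unfolding Acfg_def by simp
      then obtain v where v: "c = (lquot v P, lquot v T, DD u v)" "length v = length u" "bad T v" "bad T u"
        by blast
      have "DD u v \<in> Dset B" using v(2,3,4) B by (intro DD_bound) auto
      then show "c \<in> UA" unfolding UA_def v(1) by blast
    qed
    moreover have "Gset st T P u \<subseteq> UG"
    proof
      fix K assume "K \<in> Gset st T P u"
      then have "\<exists>j v0. K = lquot (drop j u) (Wf (lquot v0 P) (DD (take j u) v0)) \<and>
          j \<le> length u \<and> length v0 = j \<and> \<not> bad T v0 \<and> (\<forall>i<j. bad T (take i v0) \<and> bad T (take i u)) \<and>
          (st \<longrightarrow> bad T (take j u)) \<and> compat (take j u) v0"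
        unfolding Gset_def by simp
      then obtain j v0 where g: "K = lquot (drop j u) (Wf (lquot v0 P) (DD (take j u) v0))"
        "j \<le> length u" "length v0 = j" "\<not> bad T v0" "\<forall>i<j. bad T (take i v0) \<and> bad T (take i u)"
        by blast
      have fs: "finite_shift (lquot v0 P)"
      proof -
        have "finite_shift (lquot v0 T)" using g(4) unfolding bad_def by simp
        moreover have "lquot v0 P \<subseteq> lquot v0 T" using PT unfolding lquot_def by auto
        ultimately show ?thesis using finite_shift_mono by blast
      qed
      have l1: "lagw (take j u) \<le> int (B + 1)" using lag_pre[OF B] g(5) by blast
      have "lagw (take j v0) \<le> int (B + 1)" using lag_pre[OF B] g(5) by blast
      then have l2: "lagw v0 \<le> int (B + 1)" using g(3) by simp
      have "DD (take j u) v0 \<in> Dset (B + 1)" using g(2,3) l1 l2 by (intro DD_bound) auto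
      then have "Wf (lquot v0 P) (DD (take j u) v0) \<in> Wfam" unfolding Wfam_def using fs
        by (intro image_eqI[where x="(lquot v0 P, DD (take j u) v0)"]) auto
      then show "K \<in> UG" unfolding UG_def g(1) by blast
    qed
    ultimately show "(lquot u T, Acfg T P u, Gset st T P u) \<in> range (\<lambda>x. lquot x T) \<times> Pow UA \<times> Pow UG"
      by blast
  qed
qed



lemma RegFS_iff: "regular T \<Longrightarrow> RegFS (lquot x T) \<longleftrightarrow> \<not> bad T x"
  unfolding RegFS_def bad_def using regular_lquot by blast

lemma minsync_eq:
  assumes regT: "regular T"
  shows "minsync S T = allsync S T - Zset True T T"
proof (intro set_eqI iffI)
  fix w assume w: "w \<in> minsync S T"
  then have wA: "w \<in> allsync S T" and pre: "\<forall>w'\<in>T. sem w' = sem w \<longrightarrow> preceq T w w'"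
    unfolding minsync_def allsync_def by auto
  have "w \<notin> Zset True T T"
  proof
    assume "w \<in> Zset True T T"
    then obtain m where m: "m \<in> T" "sem m = sem w" "Cnd2 True T T m w" unfolding Zset_def by blast
    then obtain j where j: "j \<le> length w" "\<not> bad T (take j m)" "bad T (take j w)"
      unfolding Cnd2_def by blast
    have "preceq T w m" using pre m by blast
    then have "RegFS (lquot (take j m) T) \<longrightarrow> RegFS (lquot (take j w) T)"
      unfolding preceq_def using j(1) by blast
    then show False using j(2,3) RegFS_iff[OF regT] by blast
  qed
  then show "w \<in> allsync S T - Zset True T T" using wA by blast
next
  fix w assume w: "w \<in> allsync S T - Zset True T T"
  then have wT: "w \<in> T" and wS: "sem w \<in> sem_lang S" and nZ: "w \<notin> Zset True T T"
    unfolding allsync_def by auto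
  have "preceq T w w'" if w': "w' \<in> T" "sem w' = sem w" for w'
  proof -
    have "\<not> bad T (take i w)" if i: "i \<le> length w" "\<not> bad T (take i w')" for i
    proof
      assume bi: "bad T (take i w)"
      define j where "j = (LEAST j. \<not> bad T (take j w'))"
      have gj: "\<not> bad T (take j w')" unfolding j_def using i(2) by (rule LeastI)
      have ji: "j \<le> i" unfolding j_def using i(2) by (rule Least_le)
      have "Cnd2 True T T w' w"
        unfolding Cnd2_def
      proof (rule disjI2, rule exI[of _ j], intro conjI allI impI)
        show "j \<le> length w" using ji i(1) by simp
        show "\<not> bad T (take j w')" by (rule gj)
        show "bad T (take j w)" using bad_take_mono[OF bi ji] .
        fix k assume "k < j"
        then show "bad T (take k w')" unfolding j_def by (rule not_less_Least[where P="\<lambda>j. \<not> bad T (take j w')", simplified])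
        show "bad T (take k w)" using bad_take_mono[OF bi] \<open>k < j\<close> ji by simp
      qed
      then have "w \<in> Zset True T T" unfolding Zset_def using wT w' by blast
      then show False using nZ by blast
    qed
    then show ?thesis unfolding preceq_def using wT w' RegFS_iff[OF regT] by auto
  qed
  then show "w \<in> minsync S T" unfolding minsync_def using wT wS by blast
qed

lemma allsync_eq:
  assumes regT: "regular T"
  shows "allsync S T = Zset False T (minsync S T)"
proof (intro set_eqI iffI)
  fix w assume w: "w \<in> allsync S T"
  then have wT: "w \<in> T" and wS: "sem w \<in> sem_lang S" unfolding allsync_def by auto
  define n where "n = length w"
  define k where "k x = (LEAST j. j = Suc n \<or> \<not> bad T (take j x))" for x
  have kle: "k x \<le> Suc n" for x unfolding k_def by (rule Least_le) simp
  have kgood: "k x \<le> n \<Longrightarrow> \<not> bad T (take (k x) x)" for x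
  proof -
    assume "k x \<le> n"
    have "k x = Suc n \<or> \<not> bad T (take (k x) x)" unfolding k_def by (rule LeastI[of _ "Suc n"]) simp
    then show ?thesis using \<open>k x \<le> n\<close> by simp
  qed
  have kbad: "i < k x \<Longrightarrow> bad T (take i x)" for i x
  proof -
    assume "i < k x"
    then have "\<not> (i = Suc n \<or> \<not> bad T (take i x))" unfolding k_def by (rule not_less_Least)
    then show ?thesis by simp
  qed
  have kmin: "\<not> bad T (take i x) \<Longrightarrow> k x \<le> i" for i x unfolding k_def by (rule Least_le) simp
  obtain m where m: "m \<in> T \<and> sem m = sem w" and mmin: "\<forall>y. y \<in> T \<and> sem y = sem w \<longrightarrow> k m \<le> k y"
    using ex_has_least_nat[of "\<lambda>y. y \<in> T \<and> sem y = sem w" w k] wT by blast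
  have lm: "length m = n" unfolding n_def using m sem_length by blast
  have mM: "m \<in> minsync S T"
  proof -
    have "preceq T m w'" if w': "w' \<in> T" "sem w' = sem m" for w'
    proof -
      have lw': "length w' = n" using w' lm sem_length by metis
      have "\<not> bad T (take i m)" if i: "i \<le> length m" "\<not> bad T (take i w')" for i
      proof
        assume bi: "bad T (take i m)"
        have "k w' \<le> i" using kmin i(2) .
        moreover have "k m \<le> k w'" using mmin w' m by auto
        ultimately have "k m \<le> n" using i(1) lm by simp
        then have "\<not> bad T (take (k m) m)" by (rule kgood)
        moreover have "k m \<le> i" using \<open>k w' \<le> i\<close> \<open>k m \<le> k w'\<close> by simp
        ultimately show False using bad_take_mono[OF bi] by blast
      qed
      then show ?thesis unfolding preceq_def using m w' RegFS_iff[OF regT] by auto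
    qed
    then show ?thesis unfolding minsync_def using m wS by auto
  qed
  have kw: "k m \<le> k w" using mmin wT by blast
  have "Cnd2 False T T m w"
  proof (cases "k m \<le> n")
    case True
    show ?thesis unfolding Cnd2_def
    proof (rule disjI2, rule exI[of _ "k m"], intro conjI allI impI)
      show "k m \<le> length w" using True n_def by simp
      show "\<not> bad T (take (k m) m)" using kgood[OF True] .
      fix i assume "i < k m"
      then show "bad T (take i m)" "bad T (take i w)" using kbad kw by auto
    qed simp
  next
    case False
    then have km: "k m = Suc n" using kle[of m] by simp
    show ?thesis unfolding Cnd2_def
    proof (rule disjI1, intro conjI allI impI)
      fix i assume "i \<le> length w"
      then have "i < k m" "i < k w" using km kw n_def by auto
      then show "bad T (take i m)" "bad T (take i w)" using kbad by auto
    qed simp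
  qed
  then show "w \<in> Zset False T (minsync S T)" unfolding Zset_def using wT mM m by blast
next
  fix w assume "w \<in> Zset False T (minsync S T)"
  then obtain m where "w \<in> T" "m \<in> minsync S T" "sem m = sem w" unfolding Zset_def by blast
  then show "w \<in> allsync S T" unfolding allsync_def minsync_def by auto
qed

lemma minsync_sub: "minsync S T \<subseteq> T" unfolding minsync_def by auto

theorem mainTheorem16:
  fixes S T :: "('s::finite, 'g::finite) word set"
  assumes "regular S" and "regular T"
    and "finite_shiftlag S" and "finite_shiftlag T"
  shows "regular (minsync S T) \<longleftrightarrow> regular (allsync S T)"
proof -
  obtain B0 where B0: "\<forall>x. \<not> finite_shift (lquot x T) \<longrightarrow> lagw x \<le> B0"
    using bad_lag_bound[OF assms(2,4)] by blast
  define B where "B = nat B0"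
  have B: "\<forall>x. bad T x \<longrightarrow> lagw x \<le> int B"
    using B0 unfolding B_def bad_def by fastforce
  show ?thesis
  proof
    assume "regular (minsync S T)"
    then have "regular (Zset False T (minsync S T))"
      using regular_Zset[OF assms(2) _ minsync_sub B] by blast
    then show "regular (allsync S T)" using allsync_eq[OF assms(2)] by simp
  next
    assume "regular (allsync S T)"
    moreover have "regular (Zset True T T)"
      using regular_Zset[OF assms(2) assms(2) subset_refl B] by blast
    ultimately have "regular (allsync S T - Zset True T T)" by (rule regular_Diff)
    then show "regular (minsync S T)" using minsync_eq[OF assms(2)] by simp
  qed
qed

end
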